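(* For every vertex $\mathbf{x}$ of $P^n_{\mathrm{SEP}}$, the optimal values of the linear programs $\mathcal{D}\mathrm{OPT}^+(\mathbf{x})$ and $\mathcal{D}\mathrm{OPT}^{\mathrm{II}}(\mathbf{x})$ coincide.
   Context: $K_n=(V_n,E_n)$ is the complete undirected graph on $n$ nodes; $\delta(S)$ is the set of edges with exactly one endpoint in $S$. $P^n_{\mathrm{SEP}}=\{\mathbf{x}\in\mathbb{R}^{E_n} : \sum_{e\in\delta(v)}x_e=2\ \forall v;\ \sum_{e\in\delta(S)}x_e\ge 2\ \forall S \text{ with } 3\le|S|\le n-3;\ 0\le x_e\le 1\}$; a vertex is an extreme point. The support graph of $\mathbf{x}$ is $G_{\mathbf{x}}=(V_n,E_{\mathbf{x}})$ with $E_{\mathbf{x}}=\{e:x_e>0\}$. A tour is a Hamiltonian cycle of $K_n$, identified with its 0/1 characteristic vector $\mathbf{t}$. A walk on a graph $G$ is a closed walk visiting every node at least once; it is identified with its characteristic vector $\mathbf{w}$, where $w_{ij}$ is the number of times the edge $ij$ is traversed, and only walks with $w_{ij}\in\{0,1,2\}$ for all edges are considered (so there are finitely many). Edges are unordered ($ij=ji$), and accordingly $\lambda_{ijk}$ and $\lambda_{jik}$ denote the same variable (but $\lambda_{ijk}$ and $\lambda_{kji}$ are different). $\mathcal{D}\mathrm{OPT}^+(\mathbf{x})$: maximize $\sum_{\mathbf{t}\text{ tour}}\mu_{\mathbf{t}}$ subject to $\sum_{k\ne i,j}(-\lambda_{ijk}+\lambda_{ikj}+\lambda_{jki})+\sum_{\mathbf{t}}t_{ij}\mu_{\mathbf{t}}\le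 x_{ij}$ for all $ij\in E_n$, $\lambda_{ijk}\ge0$ for all $ij\in E_n$, $k\in V_n\setminus\{i,j\}$, and $\mu_{\mathbf{t}}\ge0$ for all tours $\mathbf{t}$. $\mathcal{D}\mathrm{OPT}^{\mathrm{II}}(\mathbf{x})$: maximize $\sum_{\mathbf{w}\text{ walk on }G_{\mathbf{x}}}\mu_{\mathbf{w}}$ subject to $\sum_{\mathbf{w}\text{ walk on }G_{\mathbf{x}}}w_{ij}\mu_{\mathbf{w}}\le x_{ij}$ for all $ij\in E_{\mathbf{x}}$, and $\mu_{\mathbf{w}}\ge0$. *)

theory Defs
  imports Main "HOL-Library.Extended_Real"
begin

definition edges :: "nat \<Rightarrow> nat set set" where
  "edges n = {{i, j} | i j. i < n \<and> j < n \<and> i \<noteq> j}"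

definition cut :: "nat \<Rightarrow> nat set \<Rightarrow> nat set set" where
  "cut n S = {e \<in> edges n. card (e \<inter> S) = 1}"

text \<open>Points of R^{E_n} are functions on edges vanishing outside E_n.\<close>
definition P_SEP :: "nat \<Rightarrow> (nat set \<Rightarrow> real) set" where
  "P_SEP n = {x. (\<forall>e. e \<notin> edges n \<longrightarrow> x e = 0)
      \<and> (\<forall>v<n. (\<Sum>e\<in>cut n {v}. x e) = 2)
      \<and> (\<forall>S. S \<subseteq> {..<n} \<and> 3 \<le> card S \<and> card S \<le> n - 3 \<longrightarrow> (\<Sum>e\<in>cut n S. x e) \<ge> 2)
      \<and> (\<forall>e\<in>edges n. 0 \<le> x e \<and> x e \<le> 1)}"

definition is_vertex :: "(nat set \<Rightarrow> real) set \<Rightarrow> (nat set \<Rightarrow> real) \<Rightarrow> bool" where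
  "is_vertex P x \<longleftrightarrow> x \<in> P \<and>
     \<not> (\<exists>a\<in>P. \<exists>b\<in>P. \<exists>u::real. a \<noteq> b \<and> 0 < u \<and> u < 1 \<and>
            x = (\<lambda>e. (1 - u) * a e + u * b e))"

definition support :: "(nat set \<Rightarrow> real) \<Rightarrow> nat \<Rightarrow> nat set set" where
  "support x n = {e \<in> edges n. x e > 0}"

text \<open>Tours (Hamiltonian cycles of K_n), identified with their edge sets
  (i.e. with their 0/1 characteristic vectors).\<close>
definition tours :: "nat \<Rightarrow> nat set set set" where
  "tours n = {{{vs ! i, vs ! ((i + 1) mod n)} | i. i < n} | vs.
      3 \<le> n \<and> distinct vs \<and> set vs = {..<n}}"

text \<open>Characteristic vectors of closed walks on the graph (V_n, E) visiting every
  node, with every edge traversed at most twice.\<close>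
definition walks :: "nat \<Rightarrow> nat set set \<Rightarrow> (nat set \<Rightarrow> nat) set" where
  "walks n E = {w. \<exists>vs. let k = length vs in
      k > 0 \<and> set vs = {..<n}
      \<and> (\<forall>i<k. {vs ! i, vs ! ((i + 1) mod k)} \<in> E)
      \<and> w = (\<lambda>e. card {i. i < k \<and> {vs ! i, vs ! ((i + 1) mod k)} = e})
      \<and> (\<forall>e. w e \<le> 2)}"

definition DOPT_plus :: "nat \<Rightarrow> (nat set \<Rightarrow> real) \<Rightarrow> ereal" where
  "DOPT_plus n x = Sup {ereal (\<Sum>t\<in>tours n. \<mu> t) | (lam::nat set \<Rightarrow> nat \<Rightarrow> real) \<mu>.
      (\<forall>e\<in>edges n. \<forall>k<n. k \<notin> e \<longrightarrow> 0 \<le> lam e k)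
      \<and> (\<forall>t\<in>tours n. 0 \<le> \<mu> t)
      \<and> (\<forall>i<n. \<forall>j<n. i \<noteq> j \<longrightarrow>
           (\<Sum>k\<in>{..<n} - {i, j}. - lam {i, j} k + lam {i, k} j + lam {j, k} i)
           + (\<Sum>t\<in>{t \<in> tours n. {i, j} \<in> t}. \<mu> t) \<le> x {i, j})}"

definition DOPT_II :: "nat \<Rightarrow> (nat set \<Rightarrow> real) \<Rightarrow> ereal" where
  "DOPT_II n x = Sup {ereal (\<Sum>w\<in>walks n (support x n). \<mu> w) | \<mu>.
      (\<forall>w\<in>walks n (support x n). 0 \<le> \<mu> w)
      \<and> (\<forall>e\<in>support x n. (\<Sum>w\<in>walks n (support x n). real (w e) * \<mu> w) \<le> x e)}"

end

theory Submission
  imports Defs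
begin

fun pe :: "nat list \<Rightarrow> nat set \<Rightarrow> nat" where
  "pe (x # y # r) g = (if {x, y} = g then 1 else 0) + pe (y # r) g"
| "pe _ g = 0"

fun cd :: "nat list \<Rightarrow> bool" where
  "cd (x # y # r) = (x \<noteq> y \<and> cd (y # r))"
| "cd _ = True"

lemma pe_Cons: "Y \<noteq> [] \<Longrightarrow> pe (x # Y) g = (if {x, hd Y} = g then 1 else 0) + pe Y g"
  by (cases Y) auto

lemma cd_Cons: "Y \<noteq> [] \<Longrightarrow> cd (x # Y) = (x \<noteq> hd Y \<and> cd Y)"
  by (cases Y) auto

lemma pe_append: "X \<noteq> [] \<Longrightarrow> Y \<noteq> [] \<Longrightarrow>
   pe (X @ Y) g = pe X g + (if {last X, hd Y} = g then 1 else 0) + pe Y g"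
proof (induction X)
  case Nil then show ?case by simp
next
  case (Cons x X)
  show ?case
  proof (cases "X = []")
    case True then show ?thesis using Cons by (simp add: pe_Cons)
  next
    case False
    then have "pe ((x # X) @ Y) g = (if {x, hd X} = g then 1 else 0) + pe (X @ Y) g"
      using pe_Cons[of "X @ Y" x g] by simp
    also have "\<dots> = (if {x, hd X} = g then 1 else 0) + pe X g + (if {last X, hd Y} = g then 1 else 0) + pe Y g"
      using Cons False by simp
    finally show ?thesis using False pe_Cons[of X x g] by simp
  qed
qed

lemma cd_append: "X \<noteq> [] \<Longrightarrow> Y \<noteq> [] \<Longrightarrow>
   cd (X @ Y) = (cd X \<and> last X \<noteq> hd Y \<and> cd Y)"
proof (induction X)
  case Nil then show ?case by simp
next
  case (Cons x X)
  show ?case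
  proof (cases "X = []")
    case True then show ?thesis using Cons by (simp add: cd_Cons)
  next
    case False
    then show ?thesis using Cons cd_Cons[of "X @ Y" x] cd_Cons[of X x] by auto
  qed
qed

lemma pe_rev: "pe (rev X) g = pe X g"
proof (induction X)
  case Nil then show ?case by simp
next
  case (Cons x X)
  show ?case
  proof (cases "X = []")
    case True then show ?thesis by simp
  next
    case False
    then show ?thesis using Cons pe_append[of "rev X" "[x]" g] pe_Cons[of X x g]
      by (simp add: last_rev insert_commute)
  qed
qed

lemma cd_rev: "cd (rev X) = cd X"
proof (induction X)
  case Nil then show ?case by simp
next
  case (Cons x X)
  show ?case
  proof (cases "X = []")
    case True then show ?thesis by simp
  next
    case False
    then show ?thesis using Cons cd_append[of "rev X" "[x]"] cd_Cons[of X x]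
      by (auto simp add: last_rev)
  qed
qed

lemma pe_idx: "pe p g = card {i. Suc i < length p \<and> {p ! i, p ! Suc i} = g}"
proof (induction p rule: induct_list012)
  case (3 x y r)
  have "{i. Suc i < length (x # y # r) \<and> {(x # y # r) ! i, (x # y # r) ! Suc i} = g}
     = (if {x, y} = g then {0} else {}) \<union> Suc ` {i. Suc i < length (y # r) \<and> {(y # r) ! i, (y # r) ! Suc i} = g}"
    (is "?L = ?R")
  proof
    show "?L \<subseteq> ?R"
    proof
      fix i assume "i \<in> ?L"
      then show "i \<in> ?R" by (cases i) auto
    qed
  next
    show "?R \<subseteq> ?L" by auto
  qed
  moreover have "finite {i. Suc i < length (y # r) \<and> {(y # r) ! i, (y # r) ! Suc i} = g}" by simp
  ultimately show ?case using 3 by (simp add: card_image)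
qed auto

lemma cd_idx: "cd p = (\<forall>i. Suc i < length p \<longrightarrow> p ! i \<noteq> p ! Suc i)"
proof (induction p rule: induct_list012)
  case (3 x y r)
  show ?case
  proof
    assume "cd (x # y # r)"
    then show "\<forall>i. Suc i < length (x # y # r) \<longrightarrow> (x # y # r) ! i \<noteq> (x # y # r) ! Suc i"
      using 3 by (auto simp: nth_Cons split: nat.splits)
  next
    assume h: "\<forall>i. Suc i < length (x # y # r) \<longrightarrow> (x # y # r) ! i \<noteq> (x # y # r) ! Suc i"
    have "x \<noteq> y" using h[rule_format, of 0] by simp
    moreover have "\<forall>i. Suc i < length (y # r) \<longrightarrow> (y # r) ! i \<noteq> (y # r) ! Suc i"
      using h by (metis Suc_less_eq length_Cons nth_Cons_Suc)
    ultimately show "cd (x # y # r)" using 3 by simp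
  qed
qed auto


definition ind :: "nat set \<Rightarrow> nat set \<Rightarrow> real" where
  "ind A B = (if A = B then 1 else 0)"

lemma pe_closed_idx:
  assumes "vs \<noteq> []"
  shows "pe (vs @ [hd vs]) e = card {i. i < length vs \<and> {vs ! i, vs ! ((i + 1) mod length vs)} = e}"
proof -
  have "{i. Suc i < length (vs @ [hd vs]) \<and> {(vs @ [hd vs]) ! i, (vs @ [hd vs]) ! Suc i} = e}
      = {i. i < length vs \<and> {vs ! i, vs ! ((i + 1) mod length vs)} = e}"
  proof (rule Collect_cong)
    fix i
    show "(Suc i < length (vs @ [hd vs]) \<and> {(vs @ [hd vs]) ! i, (vs @ [hd vs]) ! Suc i} = e) =
          (i < length vs \<and> {vs ! i, vs ! ((i + 1) mod length vs)} = e)"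
    proof (cases "Suc i < length vs")
      case True then show ?thesis by (simp add: nth_append)
    next
      case False
      then show ?thesis using assms
        by (cases "Suc i = length vs") (auto simp: nth_append hd_conv_nth)
    qed
  qed
  then show ?thesis by (simp add: pe_idx)
qed

lemma cd_closed_idx:
  assumes "vs \<noteq> []"
  shows "cd (vs @ [hd vs]) = (\<forall>i < length vs. vs ! i \<noteq> vs ! ((i + 1) mod length vs))"
proof -
  have "\<And>i. (Suc i < length (vs @ [hd vs]) \<longrightarrow> (vs @ [hd vs]) ! i \<noteq> (vs @ [hd vs]) ! Suc i) =
          (i < length vs \<longrightarrow> vs ! i \<noteq> vs ! ((i + 1) mod length vs))"
  proof -
    fix i
    show "(Suc i < length (vs @ [hd vs]) \<longrightarrow> (vs @ [hd vs]) ! i \<noteq> (vs @ [hd vs]) ! Suc i) =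
          (i < length vs \<longrightarrow> vs ! i \<noteq> vs ! ((i + 1) mod length vs))"
    proof (cases "Suc i < length vs")
      case True then show ?thesis by (simp add: nth_append)
    next
      case False
      then show ?thesis using assms
        by (cases "Suc i = length vs") (auto simp: nth_append hd_conv_nth)
    qed
  qed
  then show ?thesis by (simp add: cd_idx)
qed

definition tourset :: "nat \<Rightarrow> nat list \<Rightarrow> nat set set" where
  "tourset n vs = {{vs ! i, vs ! ((i + 1) mod n)} | i. i < n}"

lemma tour_edge_inj:
  assumes "distinct vs" "length vs = n" "3 \<le> n"
  shows "inj_on (\<lambda>i. {vs ! i, vs ! ((i + 1) mod n)}) {..<n}"
proof (rule inj_onI)
  fix i j assume i: "i \<in> {..<n}" and j: "j \<in> {..<n}"
    and eq: "{vs ! i, vs ! ((i + 1) mod n)} = {vs ! j, vs ! ((j + 1) mod n)}"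
  have n0: "0 < n" using assms by simp
  have mi: "(i + 1) mod n < n" "(j + 1) mod n < n" using n0 by auto
  have dinj: "\<And>a b. a < n \<Longrightarrow> b < n \<Longrightarrow> vs ! a = vs ! b \<Longrightarrow> a = b"
    using assms nth_eq_iff_index_eq by metis
  from eq have "(vs ! i = vs ! j \<and> vs ! ((i + 1) mod n) = vs ! ((j + 1) mod n)) \<or>
     (vs ! i = vs ! ((j + 1) mod n) \<and> vs ! ((i + 1) mod n) = vs ! j)"
    by (auto simp: doubleton_eq_iff)
  then show "i = j"
  proof
    assume "vs ! i = vs ! j \<and> vs ! ((i + 1) mod n) = vs ! ((j + 1) mod n)"
    then show ?thesis using dinj i j by auto
  next
    assume h: "vs ! i = vs ! ((j + 1) mod n) \<and> vs ! ((i + 1) mod n) = vs ! j"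
    then have a: "i = (j + 1) mod n" and b: "j = (i + 1) mod n" using dinj i j mi by auto
    have False
    proof (cases "i + 1 < n")
      case True
      then have "j = i + 1" using b by simp
      show False
      proof (cases "j + 1 < n")
        case True
        then have "(j + 1) mod n = j + 1" by simp
        then show False using a \<open>j = i + 1\<close> by linarith
      next
        case False
        then have "j + 1 = n" using j by simp
        then have "(j + 1) mod n = 0" by simp
        then have "i = 0" using a by linarith
        then show False using \<open>j = i + 1\<close> \<open>j + 1 = n\<close> assms by simp
      qed
    next
      case False
      then have "j = 0" using b i by (simp add: mod_if)
      then show False using a assms i False by (auto simp: mod_if)
    qed
    then show ?thesis ..
  qed
qed

lemma pe_tour:
  assumes "distinct vs" "length vs = n" "3 \<le> n"
  shows "real (pe (vs @ [hd vs]) g) = (if g \<in> tourset n vs then 1 else 0)"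
proof -
  have ne: "vs \<noteq> []" using assms by auto
  let ?E = "\<lambda>i. {vs ! i, vs ! ((i + 1) mod n)}"
  have inj: "inj_on ?E {..<n}" using tour_edge_inj[OF assms] .
  have "pe (vs @ [hd vs]) g = card {i. i < n \<and> ?E i = g}"
    using pe_closed_idx[OF ne, of g] assms by simp
  also have "\<dots> = (if g \<in> tourset n vs then 1 else 0)"
  proof (cases "g \<in> tourset n vs")
    case True
    then obtain i0 where i0: "i0 < n" "g = ?E i0" unfolding tourset_def by auto
    have "{i. i < n \<and> ?E i = g} = {i0}"
      using inj i0 by (auto simp: inj_on_def)
    then show ?thesis using True by simp
  next
    case False
    then have "{i. i < n \<and> ?E i = g} = {}" unfolding tourset_def by auto
    then show ?thesis using False by simp
  qed
  finally show ?thesis by simp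
qed

definition NN :: "nat \<Rightarrow> (nat set \<Rightarrow> nat \<Rightarrow> real) \<Rightarrow> nat \<Rightarrow> nat \<Rightarrow> real" where
  "NN n l i j = (\<Sum>k\<in>{..<n} - {i, j}. - l {i, j} k + l {i, k} j + l {j, k} i)"

definition D3 :: "nat \<Rightarrow> nat set \<Rightarrow> nat \<Rightarrow> bool" where
  "D3 n e k \<longleftrightarrow> e \<in> edges n \<and> k < n \<and> k \<notin> e"

definition nonneg :: "nat \<Rightarrow> (nat set \<Rightarrow> nat \<Rightarrow> real) \<Rightarrow> bool" where
  "nonneg n l \<longleftrightarrow> (\<forall>e k. D3 n e k \<longrightarrow> 0 \<le> l e k)"

lemma edges_iff: "{a, b} \<in> edges n \<longleftrightarrow> a < n \<and> b < n \<and> a \<noteq> b"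
  unfolding edges_def by (auto simp: doubleton_eq_iff)

lemma edgesE: "e \<in> edges n \<Longrightarrow> (\<And>a b. e = {a, b} \<Longrightarrow> a < n \<Longrightarrow> b < n \<Longrightarrow> a \<noteq> b \<Longrightarrow> P) \<Longrightarrow> P"
  unfolding edges_def by auto

lemma NN_add: "NN n (\<lambda>e k. l1 e k + l2 e k) i j = NN n l1 i j + NN n l2 i j"
  unfolding NN_def by (simp add: sum.distrib[symmetric] algebra_simps)

lemma NN_scale: "NN n (\<lambda>e k. c * l e k) i j = c * NN n l i j"
  unfolding NN_def by (simp add: sum_distrib_left algebra_simps)

lemma NN_sum: "finite C \<Longrightarrow> NN n (\<lambda>e k. \<Sum>s\<in>C. g s e k) i j = (\<Sum>s\<in>C. NN n (g s) i j)"
  unfolding NN_def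
  by (simp add: sum.swap[of _ C] sum.distrib[symmetric] sum_negf[symmetric])

lemma NN_zero:
  assumes "\<forall>e k. D3 n e k \<longrightarrow> l e k = 0" "i < n" "j < n" "i \<noteq> j"
  shows "NN n l i j = 0"
  unfolding NN_def
proof (rule sum.neutral, rule ballI)
  fix k assume k: "k \<in> {..<n} - {i, j}"
  have "D3 n {i, j} k" "D3 n {i, k} j" "D3 n {j, k} i"
    using assms k by (auto simp: D3_def edges_iff)
  then show "- l {i, j} k + l {i, k} j + l {j, k} i = 0" using assms(1) by simp
qed

lemma NN_unit:
  assumes d: "a \<noteq> b" "a \<noteq> c" "b \<noteq> c" "a < n" "b < n" "c < n" "i < n" "j < n" "i \<noteq> j"
  shows "NN n (\<lambda>e k. if e = {a, b} \<and> k = c then 1 else 0) i j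
         = ind {a, c} {i, j} + ind {b, c} {i, j} - ind {a, b} {i, j}"
proof -
  let ?A = "{..<n} - {i, j}"
  have f1: "\<And>k. (if {i, j} = {a, b} \<and> k = c then 1 else 0) = (if k = c then (if {i, j} = {a, b} then 1 else 0) else (0::real))"
    by auto
  have f2: "\<And>k. (if {i, k} = {a, b} \<and> j = c then 1 else 0) =
      (if k = b then (if i = a \<and> j = c then 1 else 0) else (0::real)) + (if k = a then (if i = b \<and> j = c then 1 else 0) else 0)"
    using d by (auto simp: doubleton_eq_iff)
  have f3: "\<And>k. (if {j, k} = {a, b} \<and> i = c then 1 else 0) =
      (if k = b then (if j = a \<and> i = c then 1 else 0) else (0::real)) + (if k = a then (if j = b \<and> i = c then 1 else 0) else 0)"
    using d by (auto simp: doubleton_eq_iff)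
  have "NN n (\<lambda>e k. if e = {a, b} \<and> k = c then 1 else 0) i j =
     - (\<Sum>k\<in>?A. (if k = c then (if {i, j} = {a, b} then 1 else 0) else (0::real)))
     + ((\<Sum>k\<in>?A. (if k = b then (if i = a \<and> j = c then 1 else 0) else (0::real))) + (\<Sum>k\<in>?A. (if k = a then (if i = b \<and> j = c then 1 else 0) else 0)))
     + ((\<Sum>k\<in>?A. (if k = b then (if j = a \<and> i = c then 1 else 0) else (0::real))) + (\<Sum>k\<in>?A. (if k = a then (if j = b \<and> i = c then 1 else 0) else 0)))"
    unfolding NN_def f1 f2 f3 by (simp add: sum.distrib sum_negf)
  also have "\<dots> = ind {a, c} {i, j} + ind {b, c} {i, j} - ind {a, b} {i, j}"
    using d by (auto simp: ind_def doubleton_eq_iff)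
  finally show ?thesis .
qed


lemma pe_Cons_real: "r \<noteq> [] \<Longrightarrow> real (pe (x # r) g) = ind {x, hd r} g + real (pe r g)"
  by (simp add: pe_Cons ind_def)

lemma pe_snoc_real: "p \<noteq> [] \<Longrightarrow> real (pe (p @ [y]) g) = real (pe p g) + ind {last p, y} g"
  by (simp add: pe_append ind_def)

lemma nonneg_zero: "nonneg n (\<lambda>e k. 0)" by (simp add: nonneg_def)

lemma NN_zero_fun: "NN n (\<lambda>e k. 0) i j = 0" by (simp add: NN_def)

lemma nonneg_add: "nonneg n l1 \<Longrightarrow> nonneg n l2 \<Longrightarrow> nonneg n (\<lambda>e k. l1 e k + l2 e k)"
  by (simp add: nonneg_def)

lemma SC:
  "s \<noteq> [] \<Longrightarrow> cd s \<Longrightarrow> set s \<subseteq> {..<n} \<Longrightarrow> hd s \<noteq> last s \<Longrightarrow>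
   \<exists>l. nonneg n l \<and> (\<forall>i<n. \<forall>j<n. i \<noteq> j \<longrightarrow> ind {hd s, last s} {i, j} + NN n l i j \<le> real (pe s {i, j}))"
proof (induction s)
  case Nil then show ?case by simp
next
  case (Cons x r)
  show ?case
  proof (cases r)
    case Nil then show ?thesis using Cons by simp
  next
    case (Cons y r')
    have rne: "r \<noteq> []" using Cons by simp
    have xy: "x \<noteq> y" and cdr: "cd r" using Cons.prems(2) Cons by auto
    have vx: "x < n" and vr: "set r \<subseteq> {..<n}" using Cons.prems(3) by auto
    have vy: "y < n" using vr Cons by auto
    let ?z = "last r"
    have lz: "last (x # r) = ?z" using rne by simp
    have vz: "?z < n" using vr rne last_in_set by blast
    have xz: "x \<noteq> ?z" using Cons.prems(4) lz by simp
    have pe_s: "\<And>g. real (pe (x # r) g) = ind {x, y} g + real (pe r g)"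
      using pe_Cons_real[OF rne] Cons by simp
    show ?thesis
    proof (cases "y = ?z")
      case True
      have "\<forall>i<n. \<forall>j<n. i \<noteq> j \<longrightarrow> ind {hd (x # r), last (x # r)} {i, j} + NN n (\<lambda>e k. 0) i j \<le> real (pe (x # r) {i, j})"
        using True lz pe_s by (simp add: NN_zero_fun)
      then show ?thesis using nonneg_zero by blast
    next
      case False
      have "hd r \<noteq> last r" using False Cons by simp
      from Cons.IH[OF rne cdr vr this] obtain l' where l': "nonneg n l'"
        "\<forall>i<n. \<forall>j<n. i \<noteq> j \<longrightarrow> ind {hd r, last r} {i, j} + NN n l' i j \<le> real (pe r {i, j})" by blast
      define l where "l = (\<lambda>e k. l' e k + (if e = {x, ?z} \<and> k = y then 1 else 0))"
      have "nonneg n (\<lambda>e k. if e = {x, ?z} \<and> k = y then 1 else 0)" by (simp add: nonneg_def)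
      then have nl: "nonneg n l" unfolding l_def using nonneg_add[OF l'(1)] by blast
      have "\<forall>i<n. \<forall>j<n. i \<noteq> j \<longrightarrow> ind {hd (x # r), last (x # r)} {i, j} + NN n l i j \<le> real (pe (x # r) {i, j})"
      proof (intro allI impI)
        fix i j assume ij: "i < n" "j < n" "i \<noteq> j"
        have "NN n l i j = NN n l' i j + (ind {x, y} {i, j} + ind {?z, y} {i, j} - ind {x, ?z} {i, j})"
          unfolding l_def NN_add using NN_unit[of x ?z y n i j] xz xy False vx vy vz ij by simp
        moreover have "ind {y, ?z} {i, j} + NN n l' i j \<le> real (pe r {i, j})"
          using l'(2) ij Cons by simp
        moreover have "{?z, y} = {y, ?z}" by auto
        ultimately show "ind {hd (x # r), last (x # r)} {i, j} + NN n l i j \<le> real (pe (x # r) {i, j})"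
          using pe_s lz by simp
      qed
      then show ?thesis using nl by blast
    qed
  qed
qed

definition fo :: "nat list \<Rightarrow> nat list" where
  "fo xs = rev (remdups (rev xs))"

lemma fo_snoc: "fo (p @ [y]) = (if y \<in> set p then fo p else fo p @ [y])"
  by (simp add: fo_def)

lemma fo_single: "fo [y] = [y]" by (simp add: fo_def)

lemma set_fo: "set (fo p) = set p" by (simp add: fo_def)

lemma distinct_fo: "distinct (fo p)" by (simp add: fo_def)

lemma hd_fo: "p \<noteq> [] \<Longrightarrow> hd (fo p) = hd p"
proof (induction p rule: rev_induct)
  case Nil then show ?case by simp
next
  case (snoc y p)
  show ?case
  proof (cases "p = []")
    case True then show ?thesis by (simp add: fo_single)
  next
    case False
    have "fo p \<noteq> []" using False set_fo by (metis set_empty)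
    then show ?thesis using snoc False by (simp add: fo_snoc)
  qed
qed

lemma FV:
  "p \<noteq> [] \<Longrightarrow> cd p \<Longrightarrow> set p \<subseteq> {..<n} \<Longrightarrow>
   \<exists>l s. nonneg n l \<and> s \<noteq> [] \<and> cd s \<and> set s \<subseteq> {..<n} \<and> hd s = last (fo p) \<and> last s = last p \<and>
     (\<forall>i<n. \<forall>j<n. i \<noteq> j \<longrightarrow> real (pe (fo p) {i, j}) + NN n l i j + real (pe s {i, j}) \<le> real (pe p {i, j}))"
proof (induction p rule: rev_induct)
  case Nil then show ?case by simp
next
  case (snoc y p)
  show ?case
  proof (cases "p = []")
    case True
    then show ?thesis using snoc.prems
      by (intro exI[of _ "\<lambda>e k. 0"] exI[of _ "[y]"]) (simp add: nonneg_zero NN_zero_fun fo_single)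
  next
    case False
    have cdp: "cd p" and zy: "last p \<noteq> y" using cd_append[OF False, of "[y]"] snoc.prems by auto
    have vp: "set p \<subseteq> {..<n}" and vy: "y < n" using snoc.prems by auto
    from snoc.IH[OF False cdp vp] obtain l s where ls: "nonneg n l" "s \<noteq> []" "cd s" "set s \<subseteq> {..<n}"
      "hd s = last (fo p)" "last s = last p"
      "\<forall>i<n. \<forall>j<n. i \<noteq> j \<longrightarrow> real (pe (fo p) {i, j}) + NN n l i j + real (pe s {i, j}) \<le> real (pe p {i, j})"
      by blast
    have pey: "\<And>g. real (pe (p @ [y]) g) = real (pe p g) + ind {last p, y} g"
      using pe_snoc_real[OF False] .
    have fne: "fo p \<noteq> []" using False set_fo by (metis set_empty)
    show ?thesis
    proof (cases "y \<in> set p")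
      case True
      have "cd (s @ [y])" using cd_append[OF ls(2), of "[y]"] ls zy by simp
      moreover have "\<forall>i<n. \<forall>j<n. i \<noteq> j \<longrightarrow> real (pe (fo (p @ [y])) {i, j}) + NN n l i j + real (pe (s @ [y]) {i, j}) \<le> real (pe (p @ [y]) {i, j})"
      proof (intro allI impI)
        fix i j assume ij: "i < n" "j < n" "i \<noteq> j"
        have "real (pe (fo p) {i, j}) + NN n l i j + real (pe s {i, j}) \<le> real (pe p {i, j})"
          using ls(7) ij by blast
        then show "real (pe (fo (p @ [y])) {i, j}) + NN n l i j + real (pe (s @ [y]) {i, j}) \<le> real (pe (p @ [y]) {i, j})"
          using pey pe_snoc_real[OF ls(2)] ls(6) True by (simp add: fo_snoc)
      qed
      ultimately show ?thesis using ls True vy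
        by (intro exI[of _ l] exI[of _ "s @ [y]"]) (simp add: fo_snoc)
    next
      case False
      have "last (fo p) \<in> set p" using fne set_fo last_in_set by metis
      then have hy: "hd (s @ [y]) \<noteq> last (s @ [y])" using ls(2,5) False by auto
      have cs: "cd (s @ [y])" using cd_append[OF ls(2), of "[y]"] ls zy by simp
      from SC[of "s @ [y]" n] hy cs ls(4) vy obtain l2 where l2: "nonneg n l2"
        "\<forall>i<n. \<forall>j<n. i \<noteq> j \<longrightarrow> ind {hd (s @ [y]), last (s @ [y])} {i, j} + NN n l2 i j \<le> real (pe (s @ [y]) {i, j})"
        by auto
      have "\<forall>i<n. \<forall>j<n. i \<noteq> j \<longrightarrow> real (pe (fo (p @ [y])) {i, j}) + NN n (\<lambda>e k. l e k + l2 e k) i j + real (pe [y] {i, j}) \<le> real (pe (p @ [y]) {i, j})"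
      proof (intro allI impI)
        fix i j assume ij: "i < n" "j < n" "i \<noteq> j"
        have "real (pe (fo (p @ [y])) {i, j}) = real (pe (fo p) {i, j}) + ind {last (fo p), y} {i, j}"
          using False pe_snoc_real[OF fne] by (simp add: fo_snoc)
        moreover have "ind {last (fo p), y} {i, j} + NN n l2 i j \<le> real (pe s {i, j}) + ind {last p, y} {i, j}"
          using l2(2) ij ls(2,5,6) pe_snoc_real[OF ls(2)] by simp
        moreover have "real (pe (fo p) {i, j}) + NN n l i j + real (pe s {i, j}) \<le> real (pe p {i, j})"
          using ls(7) ij by blast
        ultimately show "real (pe (fo (p @ [y])) {i, j}) + NN n (\<lambda>e k. l e k + l2 e k) i j + real (pe [y] {i, j}) \<le> real (pe (p @ [y]) {i, j})"
          using pey by (simp add: NN_add)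
      qed
      then show ?thesis using ls vy nonneg_add[OF ls(1) l2(1)] False
        by (intro exI[of _ "\<lambda>e k. l e k + l2 e k"] exI[of _ "[y]"]) (simp add: fo_snoc)
    qed
  qed
qed

lemma partA_walk:
  assumes p: "p \<noteq> []" "cd p" "set p = {..<n}" "hd p = last p" and n: "3 \<le> n"
  shows "\<exists>q l. distinct q \<and> set q = {..<n} \<and> length q = n \<and> nonneg n l \<and>
     (\<forall>i<n. \<forall>j<n. i \<noteq> j \<longrightarrow> real (pe (q @ [hd q]) {i, j}) + NN n l i j \<le> real (pe p {i, j}))"
proof -
  from FV[OF p(1,2), of n] p(3) obtain l s where ls: "nonneg n l" "s \<noteq> []" "cd s" "set s \<subseteq> {..<n}"
      "hd s = last (fo p)" "last s = last p"
      "\<forall>i<n. \<forall>j<n. i \<noteq> j \<longrightarrow> real (pe (fo p) {i, j}) + NN n l i j + real (pe s {i, j}) \<le> real (pe p {i, j})"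
    by auto
  let ?q = "fo p"
  have dq: "distinct ?q" and sq: "set ?q = {..<n}" using distinct_fo set_fo p by auto
  have lq: "length ?q = n" using distinct_card[OF dq] sq by simp
  have qne: "?q \<noteq> []" using lq n by auto
  have hq: "hd ?q = hd p" using hd_fo p by simp
  have "hd ?q \<noteq> last ?q"
  proof
    assume "hd ?q = last ?q"
    then have "?q ! 0 = ?q ! (n - 1)" using qne lq by (simp add: hd_conv_nth last_conv_nth)
    then show False using dq lq n nth_eq_iff_index_eq[OF dq, of 0 "n - 1"] by simp
  qed
  then have "hd s \<noteq> last s" using ls(5,6) p(4) hq by simp
  from SC[OF ls(2,3,4) this] obtain l2 where l2: "nonneg n l2"
    "\<forall>i<n. \<forall>j<n. i \<noteq> j \<longrightarrow> ind {hd s, last s} {i, j} + NN n l2 i j \<le> real (pe s {i, j})" by blast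
  have "\<forall>i<n. \<forall>j<n. i \<noteq> j \<longrightarrow> real (pe (?q @ [hd ?q]) {i, j}) + NN n (\<lambda>e k. l e k + l2 e k) i j \<le> real (pe p {i, j})"
  proof (intro allI impI)
    fix i j assume ij: "i < n" "j < n" "i \<noteq> j"
    have "real (pe (?q @ [hd ?q]) {i, j}) = real (pe ?q {i, j}) + ind {hd s, last s} {i, j}"
      using pe_snoc_real[OF qne] ls(5,6) p(4) hq by simp
    moreover have "real (pe ?q {i, j}) + NN n l i j + real (pe s {i, j}) \<le> real (pe p {i, j})"
      using ls(7) ij by blast
    moreover have "ind {hd s, last s} {i, j} + NN n l2 i j \<le> real (pe s {i, j})"
      using l2(2) ij by blast
    ultimately show "real (pe (?q @ [hd ?q]) {i, j}) + NN n (\<lambda>e k. l e k + l2 e k) i j \<le> real (pe p {i, j})"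
      by (simp add: NN_add)
  qed
  then show ?thesis using dq sq lq nonneg_add[OF ls(1) l2(1)] by blast
qed


fun rr :: "nat \<Rightarrow> nat \<Rightarrow> nat \<Rightarrow> nat list \<Rightarrow> nat list" where
  "rr a b k (x # y # r) = (if {x, y} = {a, b} then x # k # rr a b k (y # r) else x # rr a b k (y # r))"
| "rr a b k r = r"

lemma rr_Cons: "\<exists>r'. rr a b k (y # r) = y # r'"
  by (cases r) auto

lemma rr_last: "p \<noteq> [] \<Longrightarrow> last (rr a b k p) = last p"
proof (induction p rule: induct_list012)
  case (3 x y r)
  obtain r' where r': "rr a b k (y # r) = y # r'" using rr_Cons by blast
  then show ?case using 3 by auto
qed auto

lemma rr_hd: "hd (rr a b k (y # r)) = y"
  using rr_Cons by (metis list.sel(1))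

lemma rr_set: "set p \<subseteq> set (rr a b k p) \<and> set (rr a b k p) \<subseteq> insert k (set p)"
  by (induction p rule: induct_list012) auto

lemma rr_length: "length p \<le> length (rr a b k p)"
  by (induction p rule: induct_list012) auto

lemma rr_cd: "k \<notin> {a, b} \<Longrightarrow> cd p \<Longrightarrow> cd (rr a b k p)"
proof (induction p rule: induct_list012)
  case (3 x y r)
  obtain r' where r': "rr a b k (y # r) = y # r'" using rr_Cons by blast
  have "cd (rr a b k (y # r))" using 3 by simp
  then show ?case using 3 r' by (auto simp: doubleton_eq_iff)
qed auto

lemma rr_pe:
  assumes "a \<noteq> b" "k \<notin> {a, b}"
  shows "real (pe (rr a b k p) g) = real (pe p g) + real (pe p {a, b}) * (ind {a, k} g + ind {b, k} g - ind {a, b} g)"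
proof (induction p rule: induct_list012)
  case (3 x y r)
  obtain r' where r': "rr a b k (y # r) = y # r'" using rr_Cons by blast
  show ?case
  proof (cases "{x, y} = {a, b}")
    case True
    have "real (pe (rr a b k (x # y # r)) g) = ind {x, k} g + ind {k, y} g + real (pe (rr a b k (y # r)) g)"
      using True r' by (simp add: ind_def)
    moreover have "ind {x, k} g + ind {k, y} g = ind {a, k} g + ind {b, k} g"
      using True by (auto simp: doubleton_eq_iff ind_def insert_commute)
    moreover have "real (pe (x # y # r) g) = ind {a, b} g + real (pe (y # r) g)"
      using True by (simp add: ind_def)
    moreover have "real (pe (x # y # r) {a, b}) = 1 + real (pe (y # r) {a, b})"
      using True by simp
    ultimately show ?thesis using 3 by (simp add: algebra_simps)
  next
    case False
    then show ?thesis using 3 r' by (simp add: ind_def algebra_simps)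
  qed
qed auto

definition pc :: "nat list \<Rightarrow> nat set \<Rightarrow> nat" where
  "pc vs g = pe (vs @ [hd vs]) g"

definition cc :: "nat list \<Rightarrow> bool" where
  "cc vs \<longleftrightarrow> vs \<noteq> [] \<and> cd (vs @ [hd vs])"

lemma pc_rot: "X \<noteq> [] \<Longrightarrow> Y \<noteq> [] \<Longrightarrow> pc (X @ Y) g = pc (Y @ X) g"
  unfolding pc_def
  using pe_append[of X "Y @ [hd X]" g] pe_append[of Y "[hd X]" g]
        pe_append[of Y "X @ [hd Y]" g] pe_append[of X "[hd Y]" g]
  by simp

lemma cc_rot: "X \<noteq> [] \<Longrightarrow> Y \<noteq> [] \<Longrightarrow> cc (X @ Y) = cc (Y @ X)"
  unfolding cc_def
  using cd_append[of X "Y @ [hd X]"] cd_append[of Y "[hd X]"]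
        cd_append[of Y "X @ [hd Y]"] cd_append[of X "[hd Y]"]
  by auto

fun dc :: "nat \<Rightarrow> nat \<Rightarrow> nat list \<Rightarrow> nat" where
  "dc a b (x # y # r) = (if x = a \<and> y = b then 1 else 0) + dc a b (y # r)"
| "dc a b _ = 0"

lemma pe_dc: "a \<noteq> b \<Longrightarrow> pe p {a, b} = dc a b p + dc b a p"
  by (induction p rule: induct_list012) (auto simp: doubleton_eq_iff)

lemma dc_split: "Suc m \<le> dc a b p \<Longrightarrow> \<exists>P0 R. p = P0 @ a # b # R \<and> m \<le> dc a b (b # R)"
proof (induction p rule: induct_list012)
  case (3 x y r)
  show ?case
  proof (cases "x = a \<and> y = b")
    case True
    then show ?thesis using 3 by (intro exI[of _ "[]"] exI[of _ r]) auto
  next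
    case False
    then have "Suc m \<le> dc a b (y # r)" using 3(3) by (simp only: dc.simps) simp
    then obtain P0 R where "y # r = P0 @ a # b # R" "m \<le> dc a b (b # R)" using 3 by blast
    then show ?thesis by (intro exI[of _ "x # P0"] exI[of _ R]) auto
  qed
qed auto

lemma dc2: "2 \<le> dc a b p \<Longrightarrow> a \<noteq> b \<Longrightarrow> \<exists>P0 P1 P2. p = P0 @ a # b # P1 @ a # b # P2"
proof -
  assume h: "2 \<le> dc a b p" "a \<noteq> b"
  obtain P0 R where 1: "p = P0 @ a # b # R" "1 \<le> dc a b (b # R)" using dc_split[of 1 a b p] h by auto
  obtain Q0 P2 where 2: "b # R = Q0 @ a # b # P2" using dc_split[of 0 a b "b # R"] 1 by auto
  then obtain P1 where "Q0 = b # P1" using h(2) by (cases Q0) auto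
  then show ?thesis using 1 2 by auto
qed


lemma surg_core:
  assumes c: "cc (a # b # P1 @ a # b # Q)" and ab: "a \<noteq> b"
  shows "cc ((b # P1) @ (a # rev Q)) \<and> set ((b # P1) @ (a # rev Q)) = set (a # b # P1 @ a # b # Q)
     \<and> length ((b # P1) @ (a # rev Q)) < length (a # b # P1 @ a # b # Q)
     \<and> (\<forall>g. pc ((b # P1) @ (a # rev Q)) g \<le> pc (a # b # P1 @ a # b # Q) g)"
proof -
  let ?S1 = "b # P1 @ [a]" and ?S2 = "b # Q @ [a]"
  have e1: "(a # b # P1 @ a # b # Q) @ [hd (a # b # P1 @ a # b # Q)] = [a] @ (?S1 @ ?S2)" by simp
  have e2: "((b # P1) @ (a # rev Q)) @ [hd ((b # P1) @ (a # rev Q))] = (b # P1) @ rev ?S2" by simp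
  have cdall: "cd ([a] @ (?S1 @ ?S2))" using c e1 unfolding cc_def by metis
  have cS: "cd ?S1" "cd ?S2" using cdall cd_append[of "[a]" "?S1 @ ?S2"] cd_append[of ?S1 ?S2] by auto
  have cS1: "cd (b # P1) \<and> last (b # P1) \<noteq> a" using cS(1) cd_append[of "b # P1" "[a]"] by simp
  have "cd ((b # P1) @ rev ?S2)" using cd_append[of "b # P1" "rev ?S2"] cS1 cS(2) cd_rev[of ?S2] by simp
  then have cc': "cc ((b # P1) @ (a # rev Q))" unfolding cc_def using e2 by simp
  have "\<And>g. pc ((b # P1) @ (a # rev Q)) g \<le> pc (a # b # P1 @ a # b # Q) g"
  proof -
    fix g
    have "pc ((b # P1) @ (a # rev Q)) g = pe ?S1 g + pe ?S2 g"
      unfolding pc_def e2 using pe_append[of "b # P1" "rev ?S2" g] pe_append[of "b # P1" "[a]" g] pe_rev[of ?S2 g]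
      by simp
    moreover have "pc (a # b # P1 @ a # b # Q) g = (if {a, b} = g then 1 else 0) + (pe ?S1 g + (if {a, b} = g then 1 else 0) + pe ?S2 g)"
      unfolding pc_def e1 using pe_append[of "[a]" "?S1 @ ?S2" g] pe_append[of ?S1 ?S2 g] by simp
    ultimately show "pc ((b # P1) @ (a # rev Q)) g \<le> pc (a # b # P1 @ a # b # Q) g" by simp
  qed
  then show ?thesis using cc' by auto
qed

lemma surg:
  assumes c: "cc vs" and e: "3 \<le> pc vs e"
  shows "\<exists>vs'. cc vs' \<and> set vs' = set vs \<and> length vs' < length vs \<and> (\<forall>g. pc vs' g \<le> pc vs g)"
proof -
  let ?p = "vs @ [hd vs]"
  have vne: "vs \<noteq> []" and cdp: "cd ?p" using c unfolding cc_def by auto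
  define S where "S = {i. Suc i < length ?p \<and> {?p ! i, ?p ! Suc i} = e}"
  have "3 \<le> card S" using e unfolding pc_def S_def by (simp only: pe_idx)
  then have "S \<noteq> {}"
  proof -
    assume h: "3 \<le> card S"
    show "S \<noteq> {}"
    proof
      assume "S = {}" then show False using h by simp
    qed
  qed
  then obtain i0 where "i0 \<in> S" by blast
  then have i: "Suc i0 < length ?p" "{?p ! i0, ?p ! Suc i0} = e" unfolding S_def by simp_all
  have ne: "?p ! i0 \<noteq> ?p ! Suc i0" using cdp i(1) cd_idx by blast
  obtain a b where ab: "a \<noteq> b" "{a, b} = e" "2 \<le> dc a b ?p"
  proof -
    have "3 \<le> dc (?p ! i0) (?p ! Suc i0) ?p + dc (?p ! Suc i0) (?p ! i0) ?p"
      using e pe_dc[OF ne, of ?p] i(2) unfolding pc_def by simp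
    then have "2 \<le> dc (?p ! i0) (?p ! Suc i0) ?p \<or> 2 \<le> dc (?p ! Suc i0) (?p ! i0) ?p" by linarith
    moreover have "{?p ! Suc i0, ?p ! i0} = e" using i(2) by (simp add: insert_commute)
    ultimately show ?thesis using that[of "?p ! i0" "?p ! Suc i0"] that[of "?p ! Suc i0" "?p ! i0"] ne i(2) by auto
  qed
  from dc2[OF ab(3,1)] obtain P0 P1 P2 where pd: "?p = P0 @ a # b # P1 @ a # b # P2" by blast
  obtain Q vr where vr: "vr = a # b # P1 @ a # b # Q" "cc vr" "set vr = set vs" "length vr = length vs" "\<forall>g. pc vr g = pc vs g"
  proof (cases "P2 = []")
    case True
    then have "vs = P0 @ a # b # P1 @ [a]" and hb: "hd vs = b"
      using pd by (metis butlast_snoc append_Cons append_assoc butlast_append list.distinct(1) self_append_conv2, metis last_snoc last_appendR last_ConsR list.distinct(1) append_Cons)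
    then have vsd: "vs = P0 @ a # b # P1 @ [a]" by simp
    obtain P0' where P0: "P0 = b # P0'" using hb vsd ab(1) by (cases P0) auto
    have "vs = P0 @ (a # b # P1 @ [a])" using vsd by simp
    then show ?thesis using that[of "(a # b # P1 @ [a]) @ P0" P0'] c pc_rot[of P0 "a # b # P1 @ [a]"] cc_rot[of P0 "a # b # P1 @ [a]"] P0
      by auto
  next
    case False
    then obtain P2' where P2: "P2 = P2' @ [last P2]" by (metis append_butlast_last_id)
    have "vs = P0 @ a # b # P1 @ a # b # P2'"
      using pd P2 by (metis (no_types, lifting) append_Cons append_assoc butlast_snoc)
    show ?thesis
    proof (cases "P0 = []")
      case True
      then show ?thesis using that[of vs P2'] \<open>vs = _\<close> c by simp
    next
      case False
      have "vs = P0 @ (a # b # P1 @ a # b # P2')" using \<open>vs = _\<close> by simp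
      then show ?thesis using that[of "(a # b # P1 @ a # b # P2') @ P0" "P2' @ P0"] c False
          pc_rot[of P0 "a # b # P1 @ a # b # P2'"] cc_rot[of P0 "a # b # P1 @ a # b # P2'"]
        by auto
    qed
  qed
  from surg_core[of a b P1 Q] vr ab(1) show ?thesis
    by (intro exI[of _ "(b # P1) @ (a # rev Q)"]) auto
qed

lemma red:
  "cc vs \<Longrightarrow> \<exists>vs'. cc vs' \<and> set vs' = set vs \<and> (\<forall>g. pc vs' g \<le> pc vs g) \<and> (\<forall>g. pc vs' g \<le> 2)"
proof (induction "length vs" arbitrary: vs rule: less_induct)
  case less
  show ?case
  proof (cases "\<exists>e. 3 \<le> pc vs e")
    case False
    have "\<forall>g. pc vs g \<le> 2"
    proof
      fix g
      have "pc vs g < 3" using False by (simp add: not_le)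
      then show "pc vs g \<le> 2" by linarith
    qed
    then show ?thesis using less.prems by (intro exI[of _ vs]) auto
  next
    case True
    then obtain e where "3 \<le> pc vs e" by blast
    from surg[OF less.prems this] obtain v1 where v1: "cc v1" "set v1 = set vs" "length v1 < length vs"
      "\<forall>g. pc v1 g \<le> pc vs g" by blast
    from less.hyps[OF v1(3) v1(1)] obtain v2 where v2: "cc v2" "set v2 = set v1" "\<forall>g. pc v2 g \<le> pc v1 g" "\<forall>g. pc v2 g \<le> 2"
      by blast
    have "\<forall>g. pc v2 g \<le> pc vs g"
    proof
      fix g show "pc v2 g \<le> pc vs g" using le_trans[OF v2(3)[rule_format, of g] v1(4)[rule_format, of g]] .
    qed
    then show ?thesis using v1 v2 by (intro exI[of _ v2]) auto
  qed
qed


definition consm :: "nat set \<Rightarrow> nat \<Rightarrow> nat set set" where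
  "consm e k = (\<lambda>a. {a, k}) ` e"

definition nu :: "nat set \<Rightarrow> nat \<Rightarrow> nat set \<Rightarrow> real" where
  "nu e k g = (if g \<in> consm e k then 1 else 0) - (if g = e then 1 else 0)"

lemma nu_ab: "a \<noteq> b \<Longrightarrow> k \<notin> {a, b} \<Longrightarrow> nu {a, b} k g = ind {a, k} g + ind {b, k} g - ind {a, b} g"
  unfolding nu_def consm_def ind_def by (auto simp: doubleton_eq_iff)

lemma NN_unit':
  assumes "D3 n e k" "i < n" "j < n" "i \<noteq> j"
  shows "NN n (\<lambda>e' k'. if e' = e \<and> k' = k then 1 else 0) i j = nu e k {i, j}"
proof -
  have "e \<in> edges n" using assms(1) unfolding D3_def by simp
  then obtain a b where ab: "e = {a, b}" "a < n" "b < n" "a \<noteq> b" by (rule edgesE)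
  have k: "k < n" "k \<noteq> a" "k \<noteq> b" using assms(1) ab unfolding D3_def by auto
  show ?thesis using NN_unit[of a b k n i j] ab k assms nu_ab[of a b k "{i, j}"] by auto
qed

lemma edges_finite: "finite (edges n)"
proof -
  have "edges n \<subseteq> Pow {..<n}" unfolding edges_def by auto
  then show ?thesis by (rule finite_subset) simp
qed

definition pos :: "nat \<Rightarrow> (nat set \<Rightarrow> nat \<Rightarrow> real) \<Rightarrow> (nat set \<times> nat) set" where
  "pos n l = {(e, k). D3 n e k \<and> 0 < l e k}"

lemma pos_finite: "finite (pos n l)"
proof -
  have "pos n l \<subseteq> edges n \<times> {..<n}" unfolding pos_def D3_def by auto
  moreover have "finite (edges n \<times> {..<n})" using edges_finite by simp
  ultimately show ?thesis using finite_subset by blast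
qed

definition usage :: "(real \<times> nat list) list \<Rightarrow> nat set \<Rightarrow> real" where
  "usage L g = sum_list (map (\<lambda>x. fst x * real (pc (snd x) g)) L)"

definition total :: "(real \<times> nat list) list \<Rightarrow> real" where
  "total L = sum_list (map fst L)"

definition validL :: "nat \<Rightarrow> (real \<times> nat list) list \<Rightarrow> bool" where
  "validL n L \<longleftrightarrow> (\<forall>x\<in>set L. 0 \<le> fst x \<and> cc (snd x) \<and> set (snd x) = {..<n})"

lemma usage_nonneg: "validL n L \<Longrightarrow> 0 \<le> usage L g"
  unfolding usage_def validL_def by (induction L) auto

definition rrc :: "nat \<Rightarrow> nat \<Rightarrow> nat \<Rightarrow> nat list \<Rightarrow> nat list" where
  "rrc a b k vs = butlast (rr a b k (vs @ [hd vs]))"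

lemma rrc_props:
  assumes ab: "a \<noteq> b" "k \<notin> {a, b}" "k < n" and c: "cc vs" "set vs = {..<n}"
  shows "cc (rrc a b k vs) \<and> set (rrc a b k vs) = {..<n} \<and>
    (\<forall>g. real (pc (rrc a b k vs) g) = real (pc vs g) + real (pc vs {a, b}) * (ind {a, k} g + ind {b, k} g - ind {a, b} g))"
proof -
  let ?p = "vs @ [hd vs]"
  let ?r = "rr a b k ?p"
  have vne: "vs \<noteq> []" using c unfolding cc_def by simp
  have pcons: "?p = hd vs # (tl vs @ [hd vs])" using vne by simp
  have hr: "hd ?r = hd vs" by (subst pcons) (rule rr_hd)
  have lr: "last ?r = hd vs" using rr_last[of ?p a b k] by simp
  have len: "2 \<le> length ?r" using rr_length[of ?p a b k] vne by (cases vs) auto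
  have rne: "?r \<noteq> []" using len by auto
  have bne: "butlast ?r \<noteq> []" using len by (cases ?r) auto
  have rsplit: "butlast ?r @ [last ?r] = ?r" using rne by (rule append_butlast_last_id)
  have "hd ?r = hd (butlast ?r @ [last ?r])" using rsplit by simp
  also have "\<dots> = hd (butlast ?r)" using bne by simp
  finally have hb: "hd (butlast ?r) = hd vs" using hr by simp
  have req: "rrc a b k vs @ [hd (rrc a b k vs)] = ?r"
    unfolding rrc_def using hb lr rsplit by simp
  have "cd ?r" using rr_cd[OF ab(2)] c unfolding cc_def by simp
  then have cc1: "cc (rrc a b k vs)" unfolding cc_def using req bne unfolding rrc_def by simp
  have "set (rrc a b k vs @ [hd (rrc a b k vs)]) = set (rrc a b k vs)" using bne unfolding rrc_def by auto
  then have sR: "set ?r = set (rrc a b k vs)" by (simp only: req)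
  have rs: "set ?p \<subseteq> set ?r \<and> set ?r \<subseteq> insert k (set ?p)" by (rule rr_set)
  have sp: "set ?p = {..<n}" using c(2) vne by (cases vs) auto
  have s1: "set (rrc a b k vs) = {..<n}"
  proof -
    obtain R P where RP: "R = set ?r" "P = set ?p" by blast
    have "P \<subseteq> R" "R \<subseteq> insert k P" using rs RP by blast+
    have "P = {..<n}" using sp RP by blast
    then have "R = {..<n}" using ab(3) \<open>P \<subseteq> R\<close> \<open>R \<subseteq> insert k P\<close> by auto
    then show ?thesis using sR RP by simp
  qed
  have "\<forall>g. real (pc (rrc a b k vs) g) = real (pc vs g) + real (pc vs {a, b}) * (ind {a, k} g + ind {b, k} g - ind {a, b} g)"
    unfolding pc_def using req rr_pe[OF ab(1,2)] by simp
  then show ?thesis using cc1 s1 by simp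
qed

definition rl :: "real \<Rightarrow> nat \<Rightarrow> nat \<Rightarrow> nat \<Rightarrow> (real \<times> nat list) list \<Rightarrow> (real \<times> nat list) list" where
  "rl \<alpha> a b k L = map (\<lambda>x. ((1 - \<alpha>) * fst x, snd x)) L @ map (\<lambda>x. (\<alpha> * fst x, rrc a b k (snd x))) L"

lemma rl_props:
  assumes ab: "a \<noteq> b" "k \<notin> {a, b}" "k < n" and v: "validL n L" and al: "0 \<le> \<alpha>" "\<alpha> \<le> 1"
  shows "validL n (rl \<alpha> a b k L) \<and> total (rl \<alpha> a b k L) = total L \<and>
    (\<forall>g. usage (rl \<alpha> a b k L) g = usage L g + \<alpha> * usage L {a, b} * (ind {a, k} g + ind {b, k} g - ind {a, b} g))"
proof -
  have "validL n (rl \<alpha> a b k L)" using v rrc_props[OF ab] al unfolding validL_def rl_def by auto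
  moreover have "total (rl \<alpha> a b k L) = total L" unfolding total_def rl_def
    by (induction L) (auto simp: algebra_simps)
  moreover have "usage (rl \<alpha> a b k L) g = usage L g + \<alpha> * usage L {a, b} * (ind {a, k} g + ind {b, k} g - ind {a, b} g)" for g
  proof -
    have "(\<Sum>x\<leftarrow>L. (1 - \<alpha>) * fst x * real (pc (snd x) g)) + (\<Sum>x\<leftarrow>L. \<alpha> * fst x * real (pc (rrc a b k (snd x)) g))
        = (\<Sum>x\<leftarrow>L. fst x * real (pc (snd x) g)) + \<alpha> * (\<Sum>x\<leftarrow>L. fst x * real (pc (snd x) {a, b})) * (ind {a, k} g + ind {b, k} g - ind {a, b} g)"
      using v
    proof (induction L)
      case Nil then show ?case by simp
    next
      case (Cons y L)
      have vy: "cc (snd y)" "set (snd y) = {..<n}" and vL: "validL n L" using Cons.prems unfolding validL_def by auto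
      have eq: "real (pc (rrc a b k (snd y)) g) = real (pc (snd y) g) + real (pc (snd y) {a, b}) * (ind {a, k} g + ind {b, k} g - ind {a, b} g)"
        using rrc_props[OF ab vy] by blast
      show ?case
        apply (simp only: list.map(2) sum_list.Cons)
        apply (subst eq)
        using Cons.IH[OF vL] by (simp add: algebra_simps)
    qed
    then show ?thesis unfolding usage_def rl_def by (simp add: o_def mult.assoc)
  qed
  ultimately show ?thesis by blast
qed


lemma D3_edge: "D3 n e k \<Longrightarrow> (\<And>a b. e = {a, b} \<Longrightarrow> a < n \<Longrightarrow> b < n \<Longrightarrow> a \<noteq> b \<Longrightarrow> k < n \<Longrightarrow> k \<noteq> a \<Longrightarrow> k \<noteq> b \<Longrightarrow> P) \<Longrightarrow> P"
proof -
  assume h: "D3 n e k" and P: "\<And>a b. e = {a, b} \<Longrightarrow> a < n \<Longrightarrow> b < n \<Longrightarrow> a \<noteq> b \<Longrightarrow> k < n \<Longrightarrow> k \<noteq> a \<Longrightarrow> k \<noteq> b \<Longrightarrow> P"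
  have ee: "e \<in> edges n" and "k < n" "k \<notin> e" using h unfolding D3_def by auto
  obtain a b where "e = {a, b}" "a < n" "b < n" "a \<noteq> b" using ee by (rule edgesE)
  then show P using P \<open>k < n\<close> \<open>k \<notin> e\<close> by auto
qed

lemma NN_single:
  assumes "D3 n e k" "i < n" "j < n" "i \<noteq> j"
  shows "NN n (\<lambda>e' k'. if e' = e \<and> k' = k then 0 else l e' k') i j = NN n l i j - l e k * nu e k {i, j}"
proof -
  have "(\<lambda>e' k'. if e' = e \<and> k' = k then 0 else l e' k') = (\<lambda>e' k'. l e' k' + (- l e k) * (if e' = e \<and> k' = k then 1 else 0))"
    by (auto simp: fun_eq_iff)
  then have "NN n (\<lambda>e' k'. if e' = e \<and> k' = k then 0 else l e' k') i j
     = NN n l i j + NN n (\<lambda>e' k'. (- l e k) * (if e' = e \<and> k' = k then 1 else 0)) i j"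
    by (simp only: NN_add)
  also have "\<dots> = NN n l i j + (- l e k) * NN n (\<lambda>e' k'. if e' = e \<and> k' = k then 1 else 0) i j"
    by (simp only: NN_scale)
  finally show ?thesis using NN_unit'[OF assms] by simp
qed

lemma step1:
  assumes xnn: "\<forall>i<n. \<forall>j<n. i \<noteq> j \<longrightarrow> 0 \<le> x {i, j}"
    and nl: "nonneg n l" and v: "validL n L"
    and cons: "\<forall>i<n. \<forall>j<n. i \<noteq> j \<longrightarrow> usage L {i, j} + NN n l i j \<le> x {i, j}"
    and s: "(e, k) \<in> pos n l" and nc: "\<forall>s'\<in>pos n l. e \<notin> consm (fst s') (snd s')"
  shows "\<exists>l' L'. nonneg n l' \<and> card (pos n l') < card (pos n l) \<and> validL n L' \<and> total L' = total L \<and>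
     (\<forall>i<n. \<forall>j<n. i \<noteq> j \<longrightarrow> usage L' {i, j} + NN n l' i j \<le> x {i, j})"
proof -
  have D: "D3 n e k" and lpos: "0 < l e k" using s unfolding pos_def by auto
  obtain a b where ab: "e = {a, b}" "a < n" "b < n" "a \<noteq> b" "k < n" "k \<noteq> a" "k \<noteq> b"
    using D by (rule D3_edge)
  define l' where "l' = (\<lambda>e' k'. if e' = e \<and> k' = k then 0 else l e' k')"
  have nl': "nonneg n l'" using nl unfolding nonneg_def l'_def by auto
  have posl': "pos n l' = pos n l - {(e, k)}" unfolding pos_def l'_def by auto
  have card_less: "card (pos n l') < card (pos n l)"
    unfolding posl' using s pos_finite by (rule card_Diff1_less[rotated])
  define u where "u = usage L e"
  have u0: "0 \<le> u" unfolding u_def using usage_nonneg[OF v] .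
  define \<delta> where "\<delta> = min (l e k) u"
  define \<alpha> where "\<alpha> = \<delta> / u"
  have d0: "0 \<le> \<delta>" "\<delta> \<le> u" "\<delta> \<le> l e k" unfolding \<delta>_def using u0 lpos by auto
  have a01: "0 \<le> \<alpha>" "\<alpha> \<le> 1" unfolding \<alpha>_def using d0 u0 by (auto simp: divide_le_eq_1)
  have au: "\<alpha> * u = \<delta>"
  proof (cases "u = 0")
    case True then show ?thesis unfolding \<alpha>_def \<delta>_def using lpos by simp
  next
    case False then show ?thesis unfolding \<alpha>_def by simp
  qed
  define L' where "L' = rl \<alpha> a b k L"
  have kab: "k \<notin> {a, b}" using ab by auto
  from rl_props[OF ab(4) kab ab(5) v a01] have
    vL': "validL n L'" and tL': "total L' = total L" and
    uL': "\<And>g. usage L' g = usage L g + \<alpha> * usage L {a, b} * (ind {a, k} g + ind {b, k} g - ind {a, b} g)"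
    unfolding L'_def by auto
  have uL'2: "\<And>g. usage L' g = usage L g + \<delta> * nu e k g"
    using uL' nu_ab[OF ab(4) kab] ab(1) au unfolding u_def by simp
  have nuee: "nu e k e = -1"
    unfolding nu_def consm_def using ab by (auto simp: doubleton_eq_iff)
  have nupos: "\<And>g. g \<noteq> e \<Longrightarrow> 0 \<le> nu e k g" unfolding nu_def by auto
  have NNe: "NN n l' i j \<le> 0" if ij: "i < n" "j < n" "i \<noteq> j" "{i, j} = e" for i j
    unfolding NN_def
  proof (rule sum_nonpos)
    fix k' assume k': "k' \<in> {..<n} - {i, j}"
    have D1: "D3 n {i, j} k'" "D3 n {i, k'} j" "D3 n {j, k'} i"
      using ij k' by (auto simp: D3_def edges_iff)
    have t1: "0 \<le> l' {i, j} k'" using nl' D1(1) unfolding nonneg_def by blast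
    have t2: "l' {i, k'} j \<le> 0"
    proof (rule ccontr)
      assume "\<not> l' {i, k'} j \<le> 0"
      then have "({i, k'}, j) \<in> pos n l" using D1(2) unfolding pos_def l'_def by (auto split: if_splits)
      moreover have "e \<in> consm {i, k'} j" using ij unfolding consm_def by auto
      ultimately show False using nc by auto
    qed
    have t3: "l' {j, k'} i \<le> 0"
    proof (rule ccontr)
      assume "\<not> l' {j, k'} i \<le> 0"
      then have "({j, k'}, i) \<in> pos n l" using D1(3) unfolding pos_def l'_def by (auto split: if_splits)
      moreover have "e \<in> consm {j, k'} i" using ij unfolding consm_def by (auto simp: insert_commute)
      ultimately show False using nc by auto
    qed
    show "- l' {i, j} k' + l' {i, k'} j + l' {j, k'} i \<le> 0" using t1 t2 t3 by simp
  qed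
  have "\<forall>i<n. \<forall>j<n. i \<noteq> j \<longrightarrow> usage L' {i, j} + NN n l' i j \<le> x {i, j}"
  proof (intro allI impI)
    fix i j assume ij: "i < n" "j < n" "i \<noteq> j"
    have NN': "NN n l' i j = NN n l i j - l e k * nu e k {i, j}"
      unfolding l'_def using NN_single[OF D ij] .
    have c0: "usage L {i, j} + NN n l i j \<le> x {i, j}" using cons ij by blast
    have dor: "\<delta> = l e k \<or> \<delta> = u" unfolding \<delta>_def by (simp add: min_def)
    show "usage L' {i, j} + NN n l' i j \<le> x {i, j}"
    proof (cases "{i, j} = e")
      case True
      have le0: "NN n l' i j \<le> 0" using NNe[OF ij True] .
      have x0: "0 \<le> x {i, j}" using xnn ij by blast
      have nuij: "nu e k {i, j} = -1" using True nuee by simp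
      have uu: "usage L {i, j} = u" using True unfolding u_def by simp
      have e1: "usage L' {i, j} = usage L {i, j} + \<delta> * nu e k {i, j}" by (rule uL'2)
      have e2: "usage L' {i, j} = u - \<delta>" using e1 nuij uu by simp
      have e3: "NN n l' i j = NN n l i j + l e k" using NN' nuij by simp
      show ?thesis using dor e2 e3 le0 x0 c0 uu by linarith
    next
      case False
      have "0 \<le> nu e k {i, j}" using nupos[OF False] .
      then have m: "\<delta> * nu e k {i, j} \<le> l e k * nu e k {i, j}" using d0(3) by (rule mult_right_mono[rotated])
      have e1: "usage L' {i, j} = usage L {i, j} + \<delta> * nu e k {i, j}" by (rule uL'2)
      show ?thesis using e1 NN' c0 m by linarith
    qed
  qed
  then show ?thesis using nl' card_less vL' tL' by blast
qed


lemma cycle_exists: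
  assumes fin: "finite P" and ne: "P \<noteq> {}" and fP: "\<forall>s\<in>P. f s \<in> P"
  shows "\<exists>C. C \<subseteq> P \<and> C \<noteq> {} \<and> f ` C = C"
proof -
  have fm: "(f ^^ m) s \<in> P" if "s \<in> P" for m s
    using that by (induction m) (auto simp: fP)
  define C where "C = {s\<in>P. \<exists>m>0. (f ^^ m) s = s}"
  obtain s0 where s0: "s0 \<in> P" using ne by blast
  let ?h = "\<lambda>m. (f ^^ m) s0"
  have "?h ` {..card P} \<subseteq> P" using fm s0 by auto
  moreover have "card {..card P} > card P" by simp
  ultimately have "\<not> inj_on ?h {..card P}"
  proof -
    assume sub: "?h ` {..card P} \<subseteq> P" and gt: "card {..card P} > card P"
    show ?thesis
    proof
      assume "inj_on ?h {..card P}"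
      from card_inj_on_le[OF this sub fin] gt show False by linarith
    qed
  qed
  then obtain a b where ab: "a \<le> card P" "b \<le> card P" "a \<noteq> b" "?h a = ?h b"
    unfolding inj_on_def by auto
  obtain a' b' where ab': "a' < b'" "?h a' = ?h b'"
  proof (cases "a < b")
    case True then show ?thesis using that ab(4) by blast
  next
    case False then have "b < a" using ab(3) by simp
    then show ?thesis using that ab(4) by metis
  qed
  have "(f ^^ (b' - a' + a')) s0 = (f ^^ (b' - a')) ((f ^^ a') s0)" by (simp add: funpow_add)
  moreover have "b' - a' + a' = b'" using ab'(1) by simp
  ultimately have "(f ^^ (b' - a')) (?h a') = ?h b'" by simp
  then have "?h a' \<in> C" unfolding C_def using ab' fm s0 by (intro CollectI conjI exI[of _ "b' - a'"]) auto
  then have Cne: "C \<noteq> {}" by blast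
  have sub: "f ` C \<subseteq> C"
  proof
    fix t assume "t \<in> f ` C"
    then obtain s m where s: "s \<in> P" "m > 0" "(f ^^ m) s = s" "t = f s" unfolding C_def by auto
    have "(f ^^ m) (f s) = f ((f ^^ m) s)" by (simp add: funpow_swap1)
    then show "t \<in> C" unfolding C_def using s fP by auto
  qed
  have sup: "C \<subseteq> f ` C"
  proof
    fix s assume "s \<in> C"
    then obtain m where s: "s \<in> P" "m > 0" "(f ^^ m) s = s" unfolding C_def by auto
    define t where "t = (f ^^ (m - 1)) s"
    have mm: "m = Suc (m - 1)" using s(2) by simp
    have "(f ^^ m) s = (f ^^ Suc (m - 1)) s" using mm by (rule arg_cong)
    then have "f t = (f ^^ m) s" unfolding t_def by simp
    then have st: "s = f t" using s(3) by simp
    have q1: "(f ^^ m) ((f ^^ (m - 1)) s) = (f ^^ (m + (m - 1))) s" by (simp add: funpow_add)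
    have q2: "(f ^^ (m - 1)) ((f ^^ m) s) = (f ^^ ((m - 1) + m)) s" by (simp add: funpow_add)
    have "(f ^^ m) t = (f ^^ (m - 1)) ((f ^^ m) s)"
      unfolding t_def q1 q2 by (simp add: add.commute)
    then have "(f ^^ m) t = t" using s(3) t_def by simp
    moreover have "t \<in> P" unfolding t_def using fm s(1) by blast
    ultimately have "t \<in> C" unfolding C_def using s(2) by blast
    then show "s \<in> f ` C" using st by blast
  qed
  have "C \<subseteq> P" unfolding C_def by blast
  then show ?thesis using Cne sub sup by blast
qed

lemma step2:
  assumes nl: "nonneg n l" and ne: "pos n l \<noteq> {}"
    and all: "\<forall>s\<in>pos n l. \<exists>s'\<in>pos n l. fst s \<in> consm (fst s') (snd s')"
  shows "\<exists>l'. nonneg n l' \<and> card (pos n l') < card (pos n l) \<and> (\<forall>i<n. \<forall>j<n. i \<noteq> j \<longrightarrow> NN n l' i j \<le> NN n l i j)"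
proof -
  let ?P = "pos n l"
  have finP: "finite ?P" by (rule pos_finite)
  have "\<forall>s\<in>?P. \<exists>s'. s' \<in> ?P \<and> fst s \<in> consm (fst s') (snd s')" using all by blast
  from bchoice[OF this] obtain f where f: "\<forall>s\<in>?P. f s \<in> ?P \<and> fst s \<in> consm (fst (f s)) (snd (f s))"
    by blast
  have fP: "\<forall>s\<in>?P. f s \<in> ?P" using f by blast
  obtain C where C: "C \<subseteq> ?P" "C \<noteq> {}" "f ` C = C" using cycle_exists[OF finP ne fP] by blast
  have finC: "finite C" using C(1) finP finite_subset by blast
  have injC: "inj_on f C" by (rule eq_card_imp_inj_on[OF finC]) (simp only: C(3))
  let ?lam = "\<lambda>s. l (fst s) (snd s)"
  define \<epsilon> where "\<epsilon> = Min (?lam ` C)"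
  have epsle: "\<epsilon> \<le> ?lam s" if "s \<in> C" for s
    unfolding \<epsilon>_def using finC that by (intro Min_le) auto
  have "\<epsilon> \<in> ?lam ` C" unfolding \<epsilon>_def using finC C(2) by (intro Min_in) auto
  then obtain s1 where s1': "\<epsilon> = ?lam s1" "s1 \<in> C" by (rule imageE)
  then have s1: "s1 \<in> C" "?lam s1 = \<epsilon>" by simp_all
  have "s1 \<in> ?P" using s1(1) C(1) by blast
  then have eps0: "0 < \<epsilon>" using s1(2) unfolding pos_def by (auto simp: case_prod_beta)
  define l' where "l' = (\<lambda>e k. l e k - \<epsilon> * (if (e, k) \<in> C then 1 else 0))"
  have nl': "nonneg n l'"
    unfolding nonneg_def l'_def
  proof (intro allI impI)
    fix e k assume "D3 n e k"
    then have "0 \<le> l e k" using nl unfolding nonneg_def by blast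
    moreover have "(e, k) \<in> C \<Longrightarrow> \<epsilon> \<le> l e k" using epsle[of "(e, k)"] by simp
    ultimately show "0 \<le> l e k - \<epsilon> * (if (e, k) \<in> C then 1 else 0)" by auto
  qed
  have "pos n l' \<subseteq> ?P - {s1}"
  proof
    fix s assume "s \<in> pos n l'"
    then obtain e k where s: "s = (e, k)" "D3 n e k" "0 < l' e k" unfolding pos_def by auto
    have "0 < l e k" using s(3) eps0 unfolding l'_def by (auto split: if_splits)
    moreover have "s \<noteq> s1" using s s1 unfolding l'_def by auto
    ultimately show "s \<in> ?P - {s1}" using s unfolding pos_def by auto
  qed
  moreover have "card (?P - {s1}) < card ?P" using s1(1) C(1) finP by (meson card_Diff1_less subsetD)
  ultimately have cl: "card (pos n l') < card ?P" using finP
    by (meson card_mono finite_Diff le_less_trans)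
  have "NN n l' i j \<le> NN n l i j" if ij: "i < n" "j < n" "i \<noteq> j" for i j
  proof -
    let ?u = "\<lambda>s e k. if e = fst s \<and> k = snd s then 1 else (0::real)"
    have sumu: "(\<Sum>s\<in>C. ?u s e k) = (if (e, k) \<in> C then 1 else 0)" for e k
    proof -
      have "(\<Sum>s\<in>C. ?u s e k) = (\<Sum>s\<in>C. if s = (e, k) then 1 else 0)"
        by (rule sum.cong) auto
      also have "\<dots> = (if (e, k) \<in> C then 1 else 0)" using finC by (simp add: sum.delta)
      finally show ?thesis .
    qed
    have "l' = (\<lambda>e k. l e k + (- \<epsilon>) * (\<Sum>s\<in>C. ?u s e k))"
      unfolding l'_def sumu by (simp add: fun_eq_iff)
    then have "NN n l' i j = NN n l i j + (- \<epsilon>) * NN n (\<lambda>e k. \<Sum>s\<in>C. ?u s e k) i j"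
      by (simp only: NN_add NN_scale)
    also have "NN n (\<lambda>e k. \<Sum>s\<in>C. ?u s e k) i j = (\<Sum>s\<in>C. NN n (?u s) i j)"
      using finC by (rule NN_sum)
    also have "\<dots> = (\<Sum>s\<in>C. nu (fst s) (snd s) {i, j})"
    proof (rule sum.cong)
      fix s assume "s \<in> C"
      then have "D3 n (fst s) (snd s)" using C(1) unfolding pos_def by auto
      then show "NN n (?u s) i j = nu (fst s) (snd s) {i, j}" using NN_unit'[OF _ ij] by simp
    qed simp
    finally have eq: "NN n l' i j = NN n l i j - \<epsilon> * (\<Sum>s\<in>C. nu (fst s) (snd s) {i, j})" by simp
    let ?g = "{i, j}"
    have "(\<Sum>s\<in>C. nu (fst s) (snd s) ?g) = (\<Sum>s\<in>C. if ?g \<in> consm (fst s) (snd s) then 1 else 0) - (\<Sum>s\<in>C. if ?g = fst s then 1 else 0)"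
      unfolding nu_def by (simp add: sum_subtractf)
    moreover have "(\<Sum>s\<in>C. if ?g \<in> consm (fst s) (snd s) then 1 else (0::real)) = (\<Sum>s\<in>C. if ?g \<in> consm (fst (f s)) (snd (f s)) then 1 else 0)"
    proof -
      have "(\<Sum>s\<in>f ` C. if ?g \<in> consm (fst s) (snd s) then 1 else (0::real)) = (\<Sum>s\<in>C. if ?g \<in> consm (fst (f s)) (snd (f s)) then 1 else 0)"
        using sum.reindex[OF injC] by (simp add: o_def)
      then show ?thesis using C(3) by simp
    qed
    moreover have "(\<Sum>s\<in>C. if ?g = fst s then 1 else (0::real)) \<le> (\<Sum>s\<in>C. if ?g \<in> consm (fst (f s)) (snd (f s)) then 1 else 0)"
    proof (rule sum_mono)
      fix s assume "s \<in> C"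
      then have "fst s \<in> consm (fst (f s)) (snd (f s))" using f C(1) by blast
      then show "(if ?g = fst s then 1 else (0::real)) \<le> (if ?g \<in> consm (fst (f s)) (snd (f s)) then 1 else 0)" by auto
    qed
    ultimately have "0 \<le> (\<Sum>s\<in>C. nu (fst s) (snd s) ?g)" by linarith
    then show ?thesis using eq eps0 by (simp add: mult_nonneg_nonneg)
  qed
  then show ?thesis using nl' cl by blast
qed


lemma B1:
  assumes xnn: "\<forall>i<n. \<forall>j<n. i \<noteq> j \<longrightarrow> 0 \<le> x {i, j}"
  shows "nonneg n l \<Longrightarrow> validL n L \<Longrightarrow> (\<forall>i<n. \<forall>j<n. i \<noteq> j \<longrightarrow> usage L {i, j} + NN n l i j \<le> x {i, j}) \<Longrightarrow>
    \<exists>L'. validL n L' \<and> total L' = total L \<and> (\<forall>i<n. \<forall>j<n. i \<noteq> j \<longrightarrow> usage L' {i, j} \<le> x {i, j})"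
proof (induction "card (pos n l)" arbitrary: l L rule: less_induct)
  case less
  note nl = less.prems(1) and v = less.prems(2) and cons = less.prems(3)
  show ?case
  proof (cases "pos n l = {}")
    case True
    have z: "\<forall>e k. D3 n e k \<longrightarrow> l e k = 0"
    proof (intro allI impI)
      fix e k assume d: "D3 n e k"
      then have "0 \<le> l e k" using nl unfolding nonneg_def by blast
      moreover have "\<not> 0 < l e k" using True d unfolding pos_def by blast
      ultimately show "l e k = 0" by simp
    qed
    have "\<forall>i<n. \<forall>j<n. i \<noteq> j \<longrightarrow> usage L {i, j} \<le> x {i, j}"
    proof (intro allI impI)
      fix i j assume ij: "i < n" "j < n" "i \<noteq> j"
      have "NN n l i j = 0" using NN_zero[OF z ij] .
      then show "usage L {i, j} \<le> x {i, j}" using cons ij by force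
    qed
    then show ?thesis using v by blast
  next
    case ne: False
    show ?thesis
    proof (cases "\<exists>s\<in>pos n l. \<forall>s'\<in>pos n l. fst s \<notin> consm (fst s') (snd s')")
      case True
      then obtain e k where s: "(e, k) \<in> pos n l" and nc: "\<forall>s'\<in>pos n l. e \<notin> consm (fst s') (snd s')"
        by auto
      from step1[OF xnn nl v cons s nc] obtain l' L' where r: "nonneg n l'" "card (pos n l') < card (pos n l)"
        "validL n L'" "total L' = total L" "\<forall>i<n. \<forall>j<n. i \<noteq> j \<longrightarrow> usage L' {i, j} + NN n l' i j \<le> x {i, j}"
        by blast
      from less.hyps[OF r(2) r(1) r(3) r(5)] obtain L'' where
        "validL n L''" "total L'' = total L'" "\<forall>i<n. \<forall>j<n. i \<noteq> j \<longrightarrow> usage L'' {i, j} \<le> x {i, j}"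
        by blast
      then show ?thesis using r(4) by auto
    next
      case False
      then have all: "\<forall>s\<in>pos n l. \<exists>s'\<in>pos n l. fst s \<in> consm (fst s') (snd s')" by blast
      from step2[OF nl ne all] obtain l' where r: "nonneg n l'" "card (pos n l') < card (pos n l)"
        "\<forall>i<n. \<forall>j<n. i \<noteq> j \<longrightarrow> NN n l' i j \<le> NN n l i j" by blast
      have c': "\<forall>i<n. \<forall>j<n. i \<noteq> j \<longrightarrow> usage L {i, j} + NN n l' i j \<le> x {i, j}"
      proof (intro allI impI)
        fix i j assume ij: "i < n" "j < n" "i \<noteq> j"
        have "NN n l' i j \<le> NN n l i j" using r(3) ij by blast
        moreover have "usage L {i, j} + NN n l i j \<le> x {i, j}" using cons ij by blast
        ultimately show "usage L {i, j} + NN n l' i j \<le> x {i, j}" by linarith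
      qed
      from less.hyps[OF r(2) r(1) v c'] show ?thesis .
    qed
  qed
qed


lemma walks_finite:
  assumes "finite E"
  shows "finite (walks n E)"
proof -
  have "walks n E \<subseteq> {f. \<forall>x. (x \<in> E \<longrightarrow> f x \<in> {..2::nat}) \<and> (x \<notin> E \<longrightarrow> f x = 0)}"
  proof
    fix w assume "w \<in> walks n E"
    then obtain vs where vs: "w = (\<lambda>e. card {i. i < length vs \<and> {vs ! i, vs ! ((i + 1) mod length vs)} = e})"
      "\<forall>i<length vs. {vs ! i, vs ! ((i + 1) mod length vs)} \<in> E" "\<forall>e. w e \<le> 2"
      unfolding walks_def Let_def by blast
    have "w x = 0" if "x \<notin> E" for x
    proof -
      have "{i. i < length vs \<and> {vs ! i, vs ! ((i + 1) mod length vs)} = x} = {}" using vs(2) that by auto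
      then show ?thesis using vs(1) by simp
    qed
    then show "w \<in> {f. \<forall>x. (x \<in> E \<longrightarrow> f x \<in> {..2::nat}) \<and> (x \<notin> E \<longrightarrow> f x = 0)}" using vs(3) by auto
  qed
  moreover have "finite {f. \<forall>x. (x \<in> E \<longrightarrow> f x \<in> {..2::nat}) \<and> (x \<notin> E \<longrightarrow> f x = 0)}"
    using finite_set_of_finite_funs[OF assms, of "{..2::nat}" 0] by simp
  ultimately show ?thesis by (rule finite_subset)
qed

lemma walk_edge_in:
  assumes "w \<in> walks n E" "w e \<noteq> 0" shows "e \<in> E"
proof -
  obtain vs where vs: "w = (\<lambda>e. card {i. i < length vs \<and> {vs ! i, vs ! ((i + 1) mod length vs)} = e})"
      "\<forall>i<length vs. {vs ! i, vs ! ((i + 1) mod length vs)} \<in> E"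
    using assms(1) unfolding walks_def Let_def by blast
  have c: "card {i. i < length vs \<and> {vs ! i, vs ! ((i + 1) mod length vs)} = e} \<noteq> 0"
    using assms(2) vs(1) by simp
  have "{i. i < length vs \<and> {vs ! i, vs ! ((i + 1) mod length vs)} = e} \<noteq> {}"
  proof
    assume "{i. i < length vs \<and> {vs ! i, vs ! ((i + 1) mod length vs)} = e} = {}"
    then show False using c by simp
  qed
  then obtain i where "i < length vs" "{vs ! i, vs ! ((i + 1) mod length vs)} = e" by blast
  then show ?thesis using vs(2) by blast
qed

lemma tour_repr:
  assumes "t \<in> tours n"
  shows "\<exists>vs. distinct vs \<and> set vs = {..<n} \<and> length vs = n \<and> 3 \<le> n \<and> t = tourset n vs"
proof -
  obtain vs where "t = {{vs ! i, vs ! ((i + 1) mod n)} | i. i < n}" "3 \<le> n" "distinct vs" "set vs = {..<n}"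
    using assms unfolding tours_def by blast
  moreover have "length vs = n" using calculation distinct_card by fastforce
  ultimately show ?thesis unfolding tourset_def by blast
qed

lemma tours_finite: "finite (tours n)"
proof -
  have "tours n \<subseteq> Pow (Pow {..<n})"
  proof
    fix t assume "t \<in> tours n"
    then obtain vs where vs: "distinct vs" "set vs = {..<n}" "length vs = n" "t = tourset n vs"
      using tour_repr by blast
    have "e \<subseteq> {..<n}" if et: "e \<in> t" for e
    proof -
      obtain i where i: "i < n" "e = {vs ! i, vs ! ((i + 1) mod n)}" using et vs(4) unfolding tourset_def by blast
      have "(i + 1) mod n < n" using i(1) by simp
      then have "vs ! i \<in> set vs" "vs ! ((i + 1) mod n) \<in> set vs" using i(1) vs(3) by (simp_all only: nth_mem)
      then show ?thesis using i(2) vs(2) by blast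
    qed
    then show "t \<in> Pow (Pow {..<n})" by blast
  qed
  then show ?thesis by (rule finite_subset) simp
qed

lemma tour_cc:
  assumes "distinct vs" "set vs = {..<n}" "length vs = n" "3 \<le> n"
  shows "cc vs"
proof -
  have ne: "vs \<noteq> []" using assms(3,4) by auto
  have "\<forall>i < length vs. vs ! i \<noteq> vs ! ((i + 1) mod length vs)"
  proof (intro allI impI)
    fix i assume i: "i < length vs"
    have m: "(i + 1) mod length vs < length vs" using ne by simp
    have "i \<noteq> (i + 1) mod length vs"
    proof (cases "i + 1 < length vs")
      case True then show ?thesis by simp
    next
      case False
      then have "i + 1 = length vs" using i by simp
      then have z: "(i + 1) mod length vs = 0" by simp
      have "i \<noteq> 0" using \<open>i + 1 = length vs\<close> assms(3,4) by linarith
      then show ?thesis using z by simp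
    qed
    then show "vs ! i \<noteq> vs ! ((i + 1) mod length vs)" using nth_eq_iff_index_eq[OF assms(1) i m] by blast
  qed
  then have "cd (vs @ [hd vs])" by (subst cd_closed_idx[OF ne])
  then show ?thesis unfolding cc_def using ne by blast
qed

lemma sum_list_filter0:
  "(\<forall>y\<in>set L. \<not> P y \<longrightarrow> F y = (0::real)) \<Longrightarrow> sum_list (map F (filter P L)) = sum_list (map F L)"
  by (induction L) auto

lemma sum_set_sum_list:
  "(\<Sum>w\<in>W. sum_list (map (\<lambda>y. F y w) L)) = sum_list (map (\<lambda>y. (\<Sum>w\<in>W. F y w :: real)) L)"
  by (induction L) (auto simp: sum.distrib)

lemma usage_ge:
  "validL n L \<Longrightarrow> y \<in> set L \<Longrightarrow> fst y * real (pc (snd y) g) \<le> usage L g"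
proof (induction L)
  case Nil then show ?case by simp
next
  case (Cons z L)
  have vz: "0 \<le> fst z * real (pc (snd z) g)" using Cons.prems unfolding validL_def by simp
  have vL: "validL n L" using Cons.prems unfolding validL_def by simp
  have u0: "0 \<le> usage L g" using usage_nonneg[OF vL] .
  show ?case
  proof (cases "y = z")
    case True then show ?thesis using u0 unfolding usage_def by simp
  next
    case False
    then have "y \<in> set L" using Cons.prems by simp
    then show ?thesis using Cons.IH[OF vL] vz unfolding usage_def by simp
  qed
qed


lemma red_walk:
  assumes r: "cc r" "set r = {..<n}" "\<forall>g. pc r g \<le> 2"
    and sup: "\<forall>i<length r. {r ! i, r ! ((i + 1) mod length r)} \<in> E"
  shows "pc r \<in> walks n E"
proof -
  have ne: "r \<noteq> []" using r(1) unfolding cc_def by blast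
  have eq: "pc r = (\<lambda>e. card {i. i < length r \<and> {r ! i, r ! ((i + 1) mod length r)} = e})"
    unfolding pc_def using pe_closed_idx[OF ne] by (simp add: fun_eq_iff)
  show ?thesis unfolding walks_def Let_def
    using ne r(2) sup eq r(3) by (intro CollectI exI[of _ r]) simp
qed

lemma pc_pos_edge:
  assumes "cc r" "i < length r"
  shows "1 \<le> pc r {r ! i, r ! ((i + 1) mod length r)}"
proof -
  have ne: "r \<noteq> []" using assms(1) unfolding cc_def by blast
  let ?S = "{j. j < length r \<and> {r ! j, r ! ((j + 1) mod length r)} = {r ! i, r ! ((i + 1) mod length r)}}"
  have "finite ?S" by simp
  moreover have "i \<in> ?S" using assms(2) by simp
  ultimately have "0 < card ?S" by (subst card_gt_0_iff) blast
  moreover have "pc r {r ! i, r ! ((i + 1) mod length r)} = card ?S" unfolding pc_def by (rule pe_closed_idx[OF ne])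
  ultimately show ?thesis by simp
qed

lemma cc_edge_distinct:
  assumes "cc r" "i < length r"
  shows "r ! i \<noteq> r ! ((i + 1) mod length r)"
proof -
  have ne: "r \<noteq> []" using assms(1) unfolding cc_def by blast
  have "cd (r @ [hd r])" using assms(1) unfolding cc_def by blast
  then have "\<forall>i < length r. r ! i \<noteq> r ! ((i + 1) mod length r)" by (subst (asm) cd_closed_idx[OF ne])
  then show ?thesis using assms(2) by blast
qed


lemma plus_to_II:
  assumes n3: "3 \<le> n" and x0: "\<forall>e\<in>edges n. 0 \<le> x e"
    and lam: "\<forall>e\<in>edges n. \<forall>k<n. k \<notin> e \<longrightarrow> 0 \<le> lam e k" and mu: "\<forall>t\<in>tours n. 0 \<le> \<mu> t"
    and cons: "\<forall>i<n. \<forall>j<n. i \<noteq> j \<longrightarrow>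
           (\<Sum>k\<in>{..<n} - {i, j}. - lam {i, j} k + lam {i, k} j + lam {j, k} i)
           + (\<Sum>t\<in>{t \<in> tours n. {i, j} \<in> t}. \<mu> t) \<le> x {i, j}"
  shows "\<exists>\<mu>2. (\<forall>w\<in>walks n (support x n). 0 \<le> \<mu>2 w)
      \<and> (\<forall>e\<in>support x n. (\<Sum>w\<in>walks n (support x n). real (w e) * \<mu>2 w) \<le> x e)
      \<and> (\<Sum>t\<in>tours n. \<mu> t) = (\<Sum>w\<in>walks n (support x n). \<mu>2 w)"
proof -
  have xnn: "\<forall>i<n. \<forall>j<n. i \<noteq> j \<longrightarrow> 0 \<le> x {i, j}" using x0 edges_iff by blast
  have nl: "nonneg n lam" using lam unfolding nonneg_def D3_def by blast
  define V where "V t = (SOME vs. distinct vs \<and> set vs = {..<n} \<and> length vs = n \<and> 3 \<le> n \<and> t = tourset n vs)" for t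
  have V: "distinct (V t) \<and> set (V t) = {..<n} \<and> length (V t) = n \<and> 3 \<le> n \<and> t = tourset n (V t)" if "t \<in> tours n" for t
    unfolding V_def using someI_ex[OF tour_repr[OF that]] .
  obtain ts where ts: "set ts = tours n" "distinct ts" using finite_distinct_list[OF tours_finite] by blast
  define L where "L = map (\<lambda>t. (\<mu> t, V t)) ts"
  have vL: "validL n L" unfolding validL_def L_def
  proof
    fix y assume "y \<in> set (map (\<lambda>t. (\<mu> t, V t)) ts)"
    then obtain t where t: "t \<in> tours n" "y = (\<mu> t, V t)" using ts(1) by auto
    have "cc (V t)" using V[OF t(1)] tour_cc by blast
    then show "0 \<le> fst y \<and> cc (snd y) \<and> set (snd y) = {..<n}" using V[OF t(1)] mu t by simp
  qed
  have uL: "usage L g = (\<Sum>t\<in>tours n. \<mu> t * (if g \<in> t then 1 else 0))" for g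
  proof -
    have "usage L g = sum_list (map (\<lambda>t. \<mu> t * real (pc (V t) g)) ts)"
      unfolding usage_def L_def by (simp add: o_def)
    also have "\<dots> = (\<Sum>t\<in>tours n. \<mu> t * real (pc (V t) g))"
      using sum_list_distinct_conv_sum_set[OF ts(2)] ts(1) by simp
    also have "\<dots> = (\<Sum>t\<in>tours n. \<mu> t * (if g \<in> t then 1 else 0))"
    proof (rule sum.cong)
      fix t assume t: "t \<in> tours n"
      have "real (pc (V t) g) = (if g \<in> tourset n (V t) then 1 else 0)"
        unfolding pc_def using pe_tour[of "V t" n g] V[OF t] by blast
      then show "\<mu> t * real (pc (V t) g) = \<mu> t * (if g \<in> t then 1 else 0)" using V[OF t] by simp
    qed simp
    finally show ?thesis .
  qed
  have tL: "total L = (\<Sum>t\<in>tours n. \<mu> t)"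
    unfolding total_def L_def using sum_list_distinct_conv_sum_set[OF ts(2)] ts(1) by (simp add: o_def)
  have consL: "\<forall>i<n. \<forall>j<n. i \<noteq> j \<longrightarrow> usage L {i, j} + NN n lam i j \<le> x {i, j}"
  proof (intro allI impI)
    fix i j assume ij: "i < n" "j < n" "i \<noteq> j"
    have "(\<Sum>t\<in>{t \<in> tours n. {i, j} \<in> t}. \<mu> t) = (\<Sum>t\<in>tours n. if {i, j} \<in> t then \<mu> t else 0)"
      using tours_finite by (simp add: sum.inter_filter)
    also have "\<dots> = usage L {i, j}" unfolding uL by (rule sum.cong) auto
    finally have "(\<Sum>t\<in>{t \<in> tours n. {i, j} \<in> t}. \<mu> t) = usage L {i, j}" .
    then show "usage L {i, j} + NN n lam i j \<le> x {i, j}" using cons ij unfolding NN_def by fastforce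
  qed
  from B1[OF xnn nl vL consL] obtain L' where L': "validL n L'" "total L' = total L"
    "\<forall>i<n. \<forall>j<n. i \<noteq> j \<longrightarrow> usage L' {i, j} \<le> x {i, j}" by blast
  define R where "R vs = (SOME r. cc r \<and> set r = set vs \<and> (\<forall>g. pc r g \<le> pc vs g) \<and> (\<forall>g. pc r g \<le> 2))" for vs
  have R: "cc (R vs) \<and> set (R vs) = set vs \<and> (\<forall>g. pc (R vs) g \<le> pc vs g) \<and> (\<forall>g. pc (R vs) g \<le> 2)" if "cc vs" for vs
    unfolding R_def using someI_ex[OF red[OF that]] .
  define Lp where "Lp = filter (\<lambda>y. 0 < fst y) L'"
  let ?W = "walks n (support x n)"
  have finW: "finite ?W" by (rule walks_finite) (simp add: support_def edges_finite)
  have inW: "pc (R (snd y)) \<in> ?W" if y: "y \<in> set Lp" for y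
  proof -
    have yL: "y \<in> set L'" and c: "0 < fst y" using y unfolding Lp_def by auto
    have vy: "cc (snd y)" "set (snd y) = {..<n}" using L'(1) yL unfolding validL_def by auto
    let ?r = "R (snd y)"
    have r: "cc ?r" "set ?r = {..<n}" "\<forall>g. pc ?r g \<le> pc (snd y) g" "\<forall>g. pc ?r g \<le> 2"
      using R[OF vy(1)] vy(2) by auto
    have "\<forall>i<length ?r. {?r ! i, ?r ! ((i + 1) mod length ?r)} \<in> support x n"
    proof (intro allI impI)
      fix i assume i: "i < length ?r"
      let ?a = "?r ! i" and ?b = "?r ! ((i + 1) mod length ?r)"
      have ne: "?r \<noteq> []" using i by auto
      have ab: "?a \<noteq> ?b" using cc_edge_distinct[OF r(1) i] .
      have m: "(i + 1) mod length ?r < length ?r" using ne by simp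
      have an: "?a < n" "?b < n" using nth_mem[OF i] nth_mem[OF m] r(2) by auto
      have "1 \<le> pc ?r {?a, ?b}" using pc_pos_edge[OF r(1) i] .
      then have "1 \<le> pc (snd y) {?a, ?b}" using r(3) le_trans by blast
      then have "0 < fst y * real (pc (snd y) {?a, ?b})" using c by simp
      also have "\<dots> \<le> usage L' {?a, ?b}" using usage_ge[OF L'(1) yL] .
      also have "\<dots> \<le> x {?a, ?b}" using L'(3) an ab by blast
      finally have "0 < x {?a, ?b}" .
      then show "{?a, ?b} \<in> support x n" unfolding support_def using an ab edges_iff by blast
    qed
    then show ?thesis using red_walk[OF r(1) r(2) r(4)] by blast
  qed
  define \<mu>2 where "\<mu>2 w = sum_list (map (\<lambda>y. if pc (R (snd y)) = w then fst y else 0) Lp)" for w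
  have mu2: "0 \<le> \<mu>2 w" for w
    unfolding \<mu>2_def by (rule sum_list_nonneg) (auto simp: Lp_def)
  have sum1: "(\<Sum>w\<in>?W. F w * \<mu>2 w) = sum_list (map (\<lambda>y. F (pc (R (snd y))) * fst y) Lp)" for F :: "(nat set \<Rightarrow> nat) \<Rightarrow> real"
  proof -
    have "(\<Sum>w\<in>?W. F w * \<mu>2 w) = (\<Sum>w\<in>?W. sum_list (map (\<lambda>y. F w * (if pc (R (snd y)) = w then fst y else 0)) Lp))"
      unfolding \<mu>2_def by (simp add: sum_list_const_mult)
    also have "\<dots> = sum_list (map (\<lambda>y. (\<Sum>w\<in>?W. F w * (if pc (R (snd y)) = w then fst y else 0))) Lp)"
      by (rule sum_set_sum_list)
    also have "\<dots> = sum_list (map (\<lambda>y. F (pc (R (snd y))) * fst y) Lp)"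
    proof (rule arg_cong[where f = sum_list], rule map_cong[OF refl])
      fix y assume y: "y \<in> set Lp"
      have "(\<Sum>w\<in>?W. F w * (if pc (R (snd y)) = w then fst y else 0)) = (\<Sum>w\<in>?W. if pc (R (snd y)) = w then F w * fst y else 0)"
        by (rule sum.cong) auto
      also have "\<dots> = F (pc (R (snd y))) * fst y" using finW inW[OF y] by simp
      finally show "(\<Sum>w\<in>?W. F w * (if pc (R (snd y)) = w then fst y else 0)) = F (pc (R (snd y))) * fst y" .
    qed
    finally show ?thesis .
  qed
  have filt: "sum_list (map F Lp) = sum_list (map F L')" if "\<forall>y\<in>set L'. fst y = 0 \<longrightarrow> F y = 0" for F :: "real \<times> nat list \<Rightarrow> real"
    unfolding Lp_def
  proof (rule sum_list_filter0, intro ballI impI)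
    fix y assume y: "y \<in> set L'" "\<not> 0 < fst y"
    then have "fst y = 0" using L'(1) unfolding validL_def by force
    then show "F y = 0" using that y by blast
  qed
  have obj: "(\<Sum>w\<in>?W. \<mu>2 w) = total L'"
  proof -
    have "(\<Sum>w\<in>?W. \<mu>2 w) = (\<Sum>w\<in>?W. (\<lambda>w. 1) w * \<mu>2 w)" by simp
    also have "\<dots> = sum_list (map fst Lp)" unfolding sum1 by simp
    also have "\<dots> = sum_list (map fst L')" by (rule filt) simp
    finally show ?thesis unfolding total_def .
  qed
  have cons2: "(\<Sum>w\<in>?W. real (w e) * \<mu>2 w) \<le> x e" if e: "e \<in> support x n" for e
  proof -
    obtain a b where ab: "e = {a, b}" "a < n" "b < n" "a \<noteq> b"
      using e unfolding support_def by (auto elim: edgesE)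
    have "(\<Sum>w\<in>?W. real (w e) * \<mu>2 w) = sum_list (map (\<lambda>y. real (pc (R (snd y)) e) * fst y) Lp)"
      by (rule sum1)
    also have "\<dots> \<le> sum_list (map (\<lambda>y. fst y * real (pc (snd y) e)) Lp)"
    proof (rule sum_list_mono)
      fix y assume y: "y \<in> set Lp"
      then have yL: "y \<in> set L'" and c: "0 < fst y" unfolding Lp_def by auto
      have vy: "cc (snd y)" using L'(1) yL unfolding validL_def by auto
      have "pc (R (snd y)) e \<le> pc (snd y) e" using R[OF vy] by blast
      then show "real (pc (R (snd y)) e) * fst y \<le> fst y * real (pc (snd y) e)"
        using c by (simp add: mult.commute)
    qed
    also have "\<dots> = sum_list (map (\<lambda>y. fst y * real (pc (snd y) e)) L')" by (rule filt) simp
    also have "\<dots> = usage L' e" unfolding usage_def ..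
    also have "\<dots> \<le> x e" using L'(3) ab by blast
    finally show ?thesis .
  qed
  have "(\<Sum>t\<in>tours n. \<mu> t) = (\<Sum>w\<in>?W. \<mu>2 w)" using obj L'(2) tL by simp
  then show ?thesis using mu2 cons2 by blast
qed


lemma walk_partA:
  assumes n3: "3 \<le> n" and w: "w \<in> walks n E" and E: "E \<subseteq> edges n"
  shows "\<exists>q l. distinct q \<and> set q = {..<n} \<and> length q = n \<and> nonneg n l \<and>
     (\<forall>i<n. \<forall>j<n. i \<noteq> j \<longrightarrow> real (pe (q @ [hd q]) {i, j}) + NN n l i j \<le> real (w {i, j}))"
proof -
  obtain vs where vs: "0 < length vs" "set vs = {..<n}"
      "\<forall>i<length vs. {vs ! i, vs ! ((i + 1) mod length vs)} \<in> E"
      "w = (\<lambda>e. card {i. i < length vs \<and> {vs ! i, vs ! ((i + 1) mod length vs)} = e})"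
    using w unfolding walks_def Let_def by blast
  have ne: "vs \<noteq> []" using vs(1) by auto
  have "\<forall>i<length vs. vs ! i \<noteq> vs ! ((i + 1) mod length vs)"
  proof (intro allI impI)
    fix i assume i: "i < length vs"
    have "{vs ! i, vs ! ((i + 1) mod length vs)} \<in> edges n" using vs(3) i E by blast
    then show "vs ! i \<noteq> vs ! ((i + 1) mod length vs)" using edges_iff by blast
  qed
  then have cdp: "cd (vs @ [hd vs])" by (subst cd_closed_idx[OF ne])
  have "set (vs @ [hd vs]) = set vs" using ne by auto
  then have sp: "set (vs @ [hd vs]) = {..<n}" using vs(2) by (rule trans)
  have ne2: "vs @ [hd vs] \<noteq> []" by simp
  have hl: "hd (vs @ [hd vs]) = last (vs @ [hd vs])" using ne by simp
  have pw: "pe (vs @ [hd vs]) g = w g" for g using pe_closed_idx[OF ne, of g] vs(4) by simp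
  from partA_walk[OF ne2 cdp sp hl n3] obtain q l where ql: "distinct q" "set q = {..<n}" "length q = n" "nonneg n l"
     "\<forall>i<n. \<forall>j<n. i \<noteq> j \<longrightarrow> real (pe (q @ [hd q]) {i, j}) + NN n l i j \<le> real (pe (vs @ [hd vs]) {i, j})"
    by blast
  then show ?thesis unfolding pw by blast
qed

lemma II_to_plus:
  assumes n3: "3 \<le> n" and x0: "\<forall>e\<in>edges n. 0 \<le> x e"
    and mu: "\<forall>w\<in>walks n (support x n). 0 \<le> \<mu> w"
    and cons: "\<forall>e\<in>support x n. (\<Sum>w\<in>walks n (support x n). real (w e) * \<mu> w) \<le> x e"
  shows "\<exists>lam \<mu>'. (\<forall>e\<in>edges n. \<forall>k<n. k \<notin> e \<longrightarrow> 0 \<le> lam e k)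
      \<and> (\<forall>t\<in>tours n. 0 \<le> \<mu>' t)
      \<and> (\<forall>i<n. \<forall>j<n. i \<noteq> j \<longrightarrow>
           (\<Sum>k\<in>{..<n} - {i, j}. - lam {i, j} k + lam {i, k} j + lam {j, k} i)
           + (\<Sum>t\<in>{t \<in> tours n. {i, j} \<in> t}. \<mu>' t) \<le> x {i, j})
      \<and> (\<Sum>w\<in>walks n (support x n). \<mu> w) = (\<Sum>t\<in>tours n. \<mu>' t)"
proof -
  let ?W = "walks n (support x n)"
  have E: "support x n \<subseteq> edges n" unfolding support_def by blast
  have finW: "finite ?W" by (rule walks_finite) (simp add: support_def edges_finite)
  have "\<forall>w\<in>?W. \<exists>ql. distinct (fst ql) \<and> set (fst ql) = {..<n} \<and> length (fst ql) = n \<and> nonneg n (snd ql) \<and>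
     (\<forall>i<n. \<forall>j<n. i \<noteq> j \<longrightarrow> real (pe (fst ql @ [hd (fst ql)]) {i, j}) + NN n (snd ql) i j \<le> real (w {i, j}))"
  proof
    fix w assume "w \<in> ?W"
    from walk_partA[OF n3 this E] obtain q l where "distinct q \<and> set q = {..<n} \<and> length q = n \<and> nonneg n l \<and>
     (\<forall>i<n. \<forall>j<n. i \<noteq> j \<longrightarrow> real (pe (q @ [hd q]) {i, j}) + NN n l i j \<le> real (w {i, j}))" by blast
    then show "\<exists>ql. distinct (fst ql) \<and> set (fst ql) = {..<n} \<and> length (fst ql) = n \<and> nonneg n (snd ql) \<and>
     (\<forall>i<n. \<forall>j<n. i \<noteq> j \<longrightarrow> real (pe (fst ql @ [hd (fst ql)]) {i, j}) + NN n (snd ql) i j \<le> real (w {i, j}))"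
      by (intro exI[of _ "(q, l)"]) simp
  qed
  from bchoice[OF this] obtain F where F: "\<forall>w\<in>?W. distinct (fst (F w)) \<and> set (fst (F w)) = {..<n} \<and> length (fst (F w)) = n \<and> nonneg n (snd (F w)) \<and>
     (\<forall>i<n. \<forall>j<n. i \<noteq> j \<longrightarrow> real (pe (fst (F w) @ [hd (fst (F w))]) {i, j}) + NN n (snd (F w)) i j \<le> real (w {i, j}))"
    by blast
  define T where "T w = tourset n (fst (F w))" for w
  have Tt: "T w \<in> tours n" if "w \<in> ?W" for w
    using F that n3 unfolding T_def tours_def tourset_def by blast
  have Tind: "real (pe (fst (F w) @ [hd (fst (F w))]) g) = (if g \<in> T w then 1 else 0)" if "w \<in> ?W" for w g
    unfolding T_def using pe_tour[of "fst (F w)" n g] F that n3 by blast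
  define lam where "lam e k = (\<Sum>w\<in>?W. \<mu> w * snd (F w) e k)" for e k
  define \<mu>' where "\<mu>' t = (\<Sum>w\<in>?W. if T w = t then \<mu> w else 0)" for t
  have lamnn: "\<forall>e\<in>edges n. \<forall>k<n. k \<notin> e \<longrightarrow> 0 \<le> lam e k"
  proof (intro ballI allI impI)
    fix e k assume "e \<in> edges n" "k < n" "k \<notin> e"
    then have d: "D3 n e k" unfolding D3_def by blast
    show "0 \<le> lam e k" unfolding lam_def
    proof (rule sum_nonneg)
      fix w assume w: "w \<in> ?W"
      have "0 \<le> snd (F w) e k" using F w d unfolding nonneg_def by blast
      then show "0 \<le> \<mu> w * snd (F w) e k" using mu w by simp
    qed
  qed
  have munn: "\<forall>t\<in>tours n. 0 \<le> \<mu>' t"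
    unfolding \<mu>'_def using mu by (auto intro: sum_nonneg)
  have cons': "(\<Sum>k\<in>{..<n} - {i, j}. - lam {i, j} k + lam {i, k} j + lam {j, k} i)
           + (\<Sum>t\<in>{t \<in> tours n. {i, j} \<in> t}. \<mu>' t) \<le> x {i, j}" if ij: "i < n" "j < n" "i \<noteq> j" for i j
  proof -
    let ?g = "{i, j}"
    have "NN n lam i j = (\<Sum>w\<in>?W. NN n (\<lambda>e k. \<mu> w * snd (F w) e k) i j)"
      unfolding lam_def using finW by (rule NN_sum)
    also have "\<dots> = (\<Sum>w\<in>?W. \<mu> w * NN n (snd (F w)) i j)" by (simp only: NN_scale)
    finally have N: "NN n lam i j = (\<Sum>w\<in>?W. \<mu> w * NN n (snd (F w)) i j)" .
    have "(\<Sum>t\<in>{t \<in> tours n. ?g \<in> t}. \<mu>' t) = (\<Sum>t\<in>tours n. if ?g \<in> t then \<mu>' t else 0)"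
      using tours_finite by (simp add: sum.inter_filter)
    also have "\<dots> = (\<Sum>t\<in>tours n. \<Sum>w\<in>?W. if T w = t then (if ?g \<in> t then \<mu> w else 0) else 0)"
    proof (rule sum.cong[OF refl])
      fix t
      show "(if ?g \<in> t then \<mu>' t else 0) = (\<Sum>w\<in>?W. if T w = t then (if ?g \<in> t then \<mu> w else 0) else 0)"
      proof (cases "?g \<in> t")
        case True
        have "(\<Sum>w\<in>?W. if T w = t then (if ?g \<in> t then \<mu> w else 0) else 0) = (\<Sum>w\<in>?W. if T w = t then \<mu> w else 0)"
          by (rule sum.cong[OF refl]) (simp add: True)
        then show ?thesis unfolding \<mu>'_def using True by simp
      next
        case False
        have "(\<Sum>w\<in>?W. if T w = t then (if ?g \<in> t then \<mu> w else 0) else 0) = 0"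
          by (rule sum.neutral) (simp add: False)
        then show ?thesis using False by simp
      qed
    qed
    also have "\<dots> = (\<Sum>w\<in>?W. \<Sum>t\<in>tours n. if T w = t then (if ?g \<in> t then \<mu> w else 0) else 0)"
      by (rule sum.swap)
    also have "\<dots> = (\<Sum>w\<in>?W. \<mu> w * (if ?g \<in> T w then 1 else 0))"
    proof (rule sum.cong)
      fix w assume w: "w \<in> ?W"
      show "(\<Sum>t\<in>tours n. if T w = t then (if ?g \<in> t then \<mu> w else 0) else 0) = \<mu> w * (if ?g \<in> T w then 1 else 0)"
        using tours_finite Tt[OF w] by simp
    qed simp
    finally have S: "(\<Sum>t\<in>{t \<in> tours n. ?g \<in> t}. \<mu>' t) = (\<Sum>w\<in>?W. \<mu> w * (if ?g \<in> T w then 1 else 0))" .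
    have "NN n lam i j + (\<Sum>t\<in>{t \<in> tours n. ?g \<in> t}. \<mu>' t) = (\<Sum>w\<in>?W. \<mu> w * (NN n (snd (F w)) i j + (if ?g \<in> T w then 1 else 0)))"
      unfolding N S by (simp add: sum.distrib[symmetric] algebra_simps)
    also have "\<dots> \<le> (\<Sum>w\<in>?W. real (w ?g) * \<mu> w)"
    proof (rule sum_mono)
      fix w assume w: "w \<in> ?W"
      have "real (pe (fst (F w) @ [hd (fst (F w))]) ?g) + NN n (snd (F w)) i j \<le> real (w ?g)"
        using F w ij by blast
      then have "NN n (snd (F w)) i j + (if ?g \<in> T w then 1 else 0) \<le> real (w ?g)" using Tind[OF w] by simp
      then show "\<mu> w * (NN n (snd (F w)) i j + (if ?g \<in> T w then 1 else 0)) \<le> real (w ?g) * \<mu> w"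
        using mu w by (simp add: mult_left_mono mult.commute)
    qed
    also have "\<dots> \<le> x ?g"
    proof (cases "?g \<in> support x n")
      case True then show ?thesis using cons by blast
    next
      case False
      have "(\<Sum>w\<in>?W. real (w ?g) * \<mu> w) = 0"
      proof (rule sum.neutral, rule ballI)
        fix w assume w: "w \<in> ?W"
        have "w ?g = 0" using walk_edge_in[OF w] False by blast
        then show "real (w ?g) * \<mu> w = 0" by simp
      qed
      moreover have "?g \<in> edges n" using ij edges_iff by blast
      ultimately show ?thesis using x0 by simp
    qed
    finally show ?thesis unfolding NN_def .
  qed
  have obj: "(\<Sum>w\<in>?W. \<mu> w) = (\<Sum>t\<in>tours n. \<mu>' t)"
  proof -
    have "(\<Sum>t\<in>tours n. \<mu>' t) = (\<Sum>w\<in>?W. \<Sum>t\<in>tours n. if T w = t then \<mu> w else 0)"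
      unfolding \<mu>'_def by (rule sum.swap)
    also have "\<dots> = (\<Sum>w\<in>?W. \<mu> w)"
    proof (rule sum.cong)
      fix w assume w: "w \<in> ?W"
      show "(\<Sum>t\<in>tours n. if T w = t then \<mu> w else 0) = \<mu> w" using tours_finite Tt[OF w] by simp
    qed simp
    finally show ?thesis by simp
  qed
  show ?thesis using lamnn munn cons' obj by blast
qed


theorem mainTheorem6:
  fixes n :: nat and x :: "nat set \<Rightarrow> real"
  assumes "3 \<le> n"
    and "is_vertex (P_SEP n) x"
  shows "DOPT_plus n x = DOPT_II n x"
proof -
  have n3: "3 \<le> n" using assms(1) .
  have xP: "x \<in> P_SEP n" using assms(2) unfolding is_vertex_def by blast
  have x0: "\<forall>e\<in>edges n. 0 \<le> x e" using xP unfolding P_SEP_def by blast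
  define A where "A = {ereal (\<Sum>t\<in>tours n. \<mu> t) | (lam::nat set \<Rightarrow> nat \<Rightarrow> real) \<mu>.
      (\<forall>e\<in>edges n. \<forall>k<n. k \<notin> e \<longrightarrow> 0 \<le> lam e k)
      \<and> (\<forall>t\<in>tours n. 0 \<le> \<mu> t)
      \<and> (\<forall>i<n. \<forall>j<n. i \<noteq> j \<longrightarrow>
           (\<Sum>k\<in>{..<n} - {i, j}. - lam {i, j} k + lam {i, k} j + lam {j, k} i)
           + (\<Sum>t\<in>{t \<in> tours n. {i, j} \<in> t}. \<mu> t) \<le> x {i, j})}"
  define B where "B = {ereal (\<Sum>w\<in>walks n (support x n). \<mu> w) | \<mu>.
      (\<forall>w\<in>walks n (support x n). 0 \<le> \<mu> w)
      \<and> (\<forall>e\<in>support x n. (\<Sum>w\<in>walks n (support x n). real (w e) * \<mu> w) \<le> x e)}"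
  have AB: "z \<in> B" if z: "z \<in> A" for z
  proof -
    obtain lam \<mu> where zz: "z = ereal (\<Sum>t\<in>tours n. \<mu> t)"
      and c1: "\<forall>e\<in>edges n. \<forall>k<n. k \<notin> e \<longrightarrow> 0 \<le> lam e k"
      and c2: "\<forall>t\<in>tours n. 0 \<le> \<mu> t"
      and c3: "\<forall>i<n. \<forall>j<n. i \<noteq> j \<longrightarrow>
           (\<Sum>k\<in>{..<n} - {i, j}. - lam {i, j} k + lam {i, k} j + lam {j, k} i)
           + (\<Sum>t\<in>{t \<in> tours n. {i, j} \<in> t}. \<mu> t) \<le> x {i, j}"
      using z unfolding A_def by blast
    from plus_to_II[OF n3 x0 c1 c2 c3] obtain \<mu>2 where
      m: "\<forall>w\<in>walks n (support x n). 0 \<le> \<mu>2 w"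
      "\<forall>e\<in>support x n. (\<Sum>w\<in>walks n (support x n). real (w e) * \<mu>2 w) \<le> x e"
      "(\<Sum>t\<in>tours n. \<mu> t) = (\<Sum>w\<in>walks n (support x n). \<mu>2 w)" by blast
    have "z = ereal (\<Sum>w\<in>walks n (support x n). \<mu>2 w)" using zz m(3) by simp
    then show ?thesis unfolding B_def using m(1,2) by blast
  qed
  have BA: "z \<in> A" if z: "z \<in> B" for z
  proof -
    obtain \<mu> where zz: "z = ereal (\<Sum>w\<in>walks n (support x n). \<mu> w)"
      and c1: "\<forall>w\<in>walks n (support x n). 0 \<le> \<mu> w"
      and c2: "\<forall>e\<in>support x n. (\<Sum>w\<in>walks n (support x n). real (w e) * \<mu> w) \<le> x e"
      using z unfolding B_def by blast
    from II_to_plus[OF n3 x0 c1 c2] obtain lam \<mu>' where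
      m: "\<forall>e\<in>edges n. \<forall>k<n. k \<notin> e \<longrightarrow> 0 \<le> lam e k"
      "\<forall>t\<in>tours n. 0 \<le> \<mu>' t"
      "\<forall>i<n. \<forall>j<n. i \<noteq> j \<longrightarrow>
           (\<Sum>k\<in>{..<n} - {i, j}. - lam {i, j} k + lam {i, k} j + lam {j, k} i)
           + (\<Sum>t\<in>{t \<in> tours n. {i, j} \<in> t}. \<mu>' t) \<le> x {i, j}"
      "(\<Sum>w\<in>walks n (support x n). \<mu> w) = (\<Sum>t\<in>tours n. \<mu>' t)" by blast
    have "z = ereal (\<Sum>t\<in>tours n. \<mu>' t)" using zz m(4) by simp
    then show ?thesis unfolding A_def using m(1,2,3) by blast
  qed
  have "A = B" using AB BA by blast
  moreover have "DOPT_plus n x = Sup A" unfolding DOPT_plus_def A_def ..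
  moreover have "DOPT_II n x = Sup B" unfolding DOPT_II_def B_def ..
  ultimately show ?thesis by simp
qed


end
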